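(* In the regression problem (R), under condition $(Rk)$, there is a constant $C$ such that for all $n$ and $1\le N\le[n/3]$, $$|\Psi_2(N)|_k\le C\,k\,\mu_{2k}^{1/k}\sqrt N/n.$$
   Context: Trigonometric system on $[0,1]$: $\varphi_1\equiv1$, $\varphi_{2l}(x)=\sqrt2\cos(2\pi lx)$, $\varphi_{2l+1}(x)=\sqrt2\sin(2\pi lx)$, $l\ge1$. Dirichlet kernel $D_N(x,y)=\sum_{j=1}^N\varphi_j(x)\varphi_j(y)$. Problem (R): $x_i=i/n$, $\xi_i$ i.i.d. centered measurement errors. $a_{i,j}(n,N)=D_{2N}(x_i,x_j)-D_N(x_i,x_j)$ and $\Psi_2(N)=n^{-2}\sum_{i,j=1}^na_{i,j}(n,N)(\xi_i\xi_j-\mathbf E\xi_i\xi_j)$. $|\eta|_m=(\mathbf E|\eta|^m)^{1/m}$. Condition $(Rk)$: $\mu_{2k}=\mathbf E\xi_1^{2k}<\infty$ for the integer $k\ge2$ in question. *)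

theory Defs
  imports "HOL-Probability.Probability"
begin

definition trig_phi :: "nat \<Rightarrow> real \<Rightarrow> real" where
  "trig_phi j x =
     (if j = 1 then 1
      else if even j then sqrt 2 * cos (2 * pi * real (j div 2) * x)
      else sqrt 2 * sin (2 * pi * real (j div 2) * x))"

definition dirichlet_kernel :: "nat \<Rightarrow> real \<Rightarrow> real \<Rightarrow> real" where
  "dirichlet_kernel N x y = (\<Sum>j=1..N. trig_phi j x * trig_phi j y)"

definition coef_a :: "nat \<Rightarrow> nat \<Rightarrow> nat \<Rightarrow> nat \<Rightarrow> real" where
  "coef_a n N i j =
     dirichlet_kernel (2 * N) (real i / real n) (real j / real n)
     - dirichlet_kernel N (real i / real n) (real j / real n)"

definition Psi2 :: "'a measure \<Rightarrow> (nat \<Rightarrow> 'a \<Rightarrow> real) \<Rightarrow> nat \<Rightarrow> nat \<Rightarrow> 'a \<Rightarrow> real" where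
  "Psi2 M \<xi> n N \<omega> =
     (1 / (real n)\<^sup>2) * (\<Sum>i=1..n. \<Sum>j=1..n. coef_a n N i j *
        (\<xi> i \<omega> * \<xi> j \<omega> - (\<integral>\<omega>'. \<xi> i \<omega>' * \<xi> j \<omega>' \<partial>M)))"

definition Lnorm :: "'a measure \<Rightarrow> nat \<Rightarrow> ('a \<Rightarrow> real) \<Rightarrow> real" where
  "Lnorm M m \<eta> = (\<integral>\<omega>. \<bar>\<eta> \<omega>\<bar> ^ m \<partial>M) powr (1 / real m)"

end

theory Submission
  imports Defs
begin

lemma pow_powr_inv:
  fixes t :: real assumes "t \<ge> 0" "k > 0"
  shows "(t ^ k) powr (1 / real k) = t"
proof (cases "t = 0")
  case True then show ?thesis using assms by simp
next
  case False
  then have "t > 0" using assms by simp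
  then have "(t ^ k) powr (1 / real k) = (t powr real k) powr (1 / real k)"
    by (simp add: powr_realpow)
  also have "\<dots> = t" using assms by (simp add: powr_powr)
  finally show ?thesis .
qed

lemma pow_powr_frac:
  fixes t :: real assumes "t \<ge> 0" "k > 0" "j > 0"
  shows "(t ^ k) powr (real j / real k) = t ^ j"
proof (cases "t = 0")
  case True then show ?thesis using assms by (simp add: power_0_left)
next
  case False
  then have "t > 0" using assms by simp
  then have "(t ^ k) powr (real j / real k) = (t powr real k) powr (real j / real k)"
    by (simp add: powr_realpow)
  also have "\<dots> = t powr real j" using assms by (simp add: powr_powr)
  also have "\<dots> = t ^ j" using \<open>t > 0\<close> by (simp add: powr_realpow)
  finally show ?thesis .
qed

lemma powr_inv_pow:
  fixes m :: real assumes "m \<ge> 0" "k > 0"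
  shows "(m powr (1 / real k)) ^ k = m"
proof (cases "m = 0")
  case True then show ?thesis using assms by simp
next
  case False
  then have "m > 0" using assms by simp
  then have "(m powr (1 / real k)) ^ k = (m powr (1 / real k)) powr real k"
    by (simp add: powr_realpow)
  also have "\<dots> = m" using assms \<open>m > 0\<close> by (simp add: powr_powr)
  finally show ?thesis .
qed

lemma powr_frac_le_pow:
  fixes m :: real assumes "m \<ge> 0" "k > 0"
  shows "m powr (real j / real k) \<le> (m powr (1 / real k)) ^ j"
proof (cases "m = 0")
  case True then show ?thesis using assms by simp
next
  case False
  then have "m > 0" using assms by simp
  have "(m powr (1 / real k)) ^ j = (m powr (1 / real k)) powr real j"
    using \<open>m > 0\<close> by (simp add: powr_realpow)
  also have "\<dots> = m powr (real j / real k)" using assms \<open>m > 0\<close> by (simp add: powr_powr)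
  finally show ?thesis by simp
qed

lemma holder:
  fixes f g :: "'a \<Rightarrow> real"
  assumes f: "integrable M f" and g: "integrable M g"
    and fnn: "\<And>\<omega>. \<omega> \<in> space M \<Longrightarrow> f \<omega> \<ge> 0" and gnn: "\<And>\<omega>. \<omega> \<in> space M \<Longrightarrow> g \<omega> \<ge> 0"
    and ab: "\<alpha> \<ge> 0" "\<beta> \<ge> 0" "\<alpha> + \<beta> = 1"
  shows "integrable M (\<lambda>\<omega>. f \<omega> powr \<alpha> * g \<omega> powr \<beta>)"
    and "(\<integral>\<omega>. f \<omega> powr \<alpha> * g \<omega> powr \<beta> \<partial>M) \<le> (\<integral>\<omega>. f \<omega> \<partial>M) powr \<alpha> * (\<integral>\<omega>. g \<omega> \<partial>M) powr \<beta>"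
proof -
  have young: "a powr \<alpha> * b powr \<beta> \<le> \<alpha> * a + \<beta> * b" if "a \<ge> 0" "b \<ge> 0" for a b :: real
  proof (cases "a = 0 \<or> b = 0")
    case True then show ?thesis using that ab by auto
  next
    case False then show ?thesis using Youngs_inequality_0[of \<alpha> \<beta> a b] that ab by auto
  qed
  have fm[measurable]: "f \<in> borel_measurable M" using f by auto
  have gm[measurable]: "g \<in> borel_measurable M" using g by auto
  show int: "integrable M (\<lambda>\<omega>. f \<omega> powr \<alpha> * g \<omega> powr \<beta>)"
  proof (rule Bochner_Integration.integrable_bound[of _ "\<lambda>\<omega>. \<alpha> * f \<omega> + \<beta> * g \<omega>"])
    show "integrable M (\<lambda>\<omega>. \<alpha> * f \<omega> + \<beta> * g \<omega>)" using f g by auto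
    show "(\<lambda>\<omega>. f \<omega> powr \<alpha> * g \<omega> powr \<beta>) \<in> borel_measurable M" by measurable
    show "AE x in M. norm (f x powr \<alpha> * g x powr \<beta>) \<le> norm (\<alpha> * f x + \<beta> * g x)"
      using young fnn gnn ab by (intro AE_I2) (auto simp: abs_mult intro!: order_trans[OF _ abs_ge_self])
  qed
  define A where "A = (\<integral>\<omega>. f \<omega> \<partial>M)"
  define B where "B = (\<integral>\<omega>. g \<omega> \<partial>M)"
  have A0: "A \<ge> 0" unfolding A_def using fnn by (auto intro!: integral_nonneg_AE)
  have B0: "B \<ge> 0" unfolding B_def using gnn by (auto intro!: integral_nonneg_AE)
  show "(\<integral>\<omega>. f \<omega> powr \<alpha> * g \<omega> powr \<beta> \<partial>M) \<le> A powr \<alpha> * B powr \<beta>"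
  proof (cases "A = 0 \<or> B = 0")
    case True
    have "AE \<omega> in M. f \<omega> powr \<alpha> * g \<omega> powr \<beta> = 0"
    proof (cases "A = 0")
      case True
      then have "AE \<omega> in M. f \<omega> = 0" unfolding A_def
        using integral_nonneg_eq_0_iff_AE[OF f] fnn by (auto intro: AE_I2)
      then show ?thesis by eventually_elim auto
    next
      case False
      then have "B = 0" using True by auto
      then have "AE \<omega> in M. g \<omega> = 0" unfolding B_def
        using integral_nonneg_eq_0_iff_AE[OF g] gnn by (auto intro: AE_I2)
      then show ?thesis by eventually_elim auto
    qed
    then have "(\<integral>\<omega>. f \<omega> powr \<alpha> * g \<omega> powr \<beta> \<partial>M) = 0"
      using integral_cong_AE[of "\<lambda>\<omega>. f \<omega> powr \<alpha> * g \<omega> powr \<beta>" M "\<lambda>_. 0"] by auto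
    then show ?thesis by simp
  next
    case False
    then have Ap: "A > 0" and Bp: "B > 0" using A0 B0 by auto
    have pw: "f \<omega> powr \<alpha> * g \<omega> powr \<beta> \<le> A powr \<alpha> * B powr \<beta> * (\<alpha> * (f \<omega> / A) + \<beta> * (g \<omega> / B))"
      if "\<omega> \<in> space M" for \<omega>
    proof -
      have "f \<omega> powr \<alpha> * g \<omega> powr \<beta> = A powr \<alpha> * B powr \<beta> * ((f \<omega> / A) powr \<alpha> * (g \<omega> / B) powr \<beta>)"
        using Ap Bp fnn[OF that] gnn[OF that] by (simp add: powr_divide field_simps)
      also have "\<dots> \<le> A powr \<alpha> * B powr \<beta> * (\<alpha> * (f \<omega> / A) + \<beta> * (g \<omega> / B))"
        using young[of "f \<omega> / A" "g \<omega> / B"] Ap Bp fnn[OF that] gnn[OF that]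
        by (intro mult_left_mono) auto
      finally show ?thesis .
    qed
    have "(\<integral>\<omega>. f \<omega> powr \<alpha> * g \<omega> powr \<beta> \<partial>M) \<le> (\<integral>\<omega>. A powr \<alpha> * B powr \<beta> * (\<alpha> * (f \<omega> / A) + \<beta> * (g \<omega> / B)) \<partial>M)"
      using pw f g by (intro integral_mono int) auto
    also have "\<dots> = A powr \<alpha> * B powr \<beta> * (\<alpha> * (A / A) + \<beta> * (B / B))"
      using f g by (simp add: A_def B_def)
    also have "\<dots> = A powr \<alpha> * B powr \<beta>" using Ap Bp ab by simp
    finally show ?thesis .
  qed
qed


definition Lk :: "'a measure \<Rightarrow> nat \<Rightarrow> ('a \<Rightarrow> real) \<Rightarrow> bool" where
  "Lk M k X \<longleftrightarrow> X \<in> borel_measurable M \<and> integrable M (\<lambda>\<omega>. \<bar>X \<omega>\<bar> ^ k)"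

lemma Lnorm_nonneg: "Lnorm M k X \<ge> 0"
  by (simp add: Lnorm_def)

lemma Lnorm_pow:
  assumes "k > 0" shows "Lnorm M k X ^ k = (\<integral>\<omega>. \<bar>X \<omega>\<bar> ^ k \<partial>M)"
  unfolding Lnorm_def by (rule powr_inv_pow[OF _ assms]) (auto intro!: integral_nonneg_AE)

lemma Lnorm_cong:
  assumes "\<And>\<omega>. \<omega> \<in> space M \<Longrightarrow> X \<omega> = Y \<omega>" shows "Lnorm M k X = Lnorm M k Y"
  unfolding Lnorm_def using assms by (simp cong: Bochner_Integration.integral_cong)

lemma Lk_cong:
  assumes "\<And>\<omega>. \<omega> \<in> space M \<Longrightarrow> X \<omega> = Y \<omega>" "Lk M k X" shows "Lk M k Y"
proof -
  have "Y \<in> borel_measurable M" using assms measurable_cong[of M X Y] unfolding Lk_def by auto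
  moreover have "integrable M (\<lambda>\<omega>. \<bar>Y \<omega>\<bar> ^ k)"
    using assms unfolding Lk_def by (auto cong: Bochner_Integration.integrable_cong)
  ultimately show ?thesis by (simp add: Lk_def)
qed

lemma abs_add_pow_le: "\<bar>x + y\<bar> ^ k \<le> 2 ^ k * (\<bar>x\<bar> ^ k + \<bar>y\<bar> ^ k)" for x y :: real
proof (cases "\<bar>x\<bar> \<le> \<bar>y\<bar>")
  case True
  then have "\<bar>x + y\<bar> ^ k \<le> (2 * \<bar>y\<bar>) ^ k" by (intro power_mono) auto
  also have "\<dots> \<le> 2 ^ k * (\<bar>x\<bar> ^ k + \<bar>y\<bar> ^ k)" by (simp add: power_mult_distrib)
  finally show ?thesis .
next
  case False
  then have "\<bar>x + y\<bar> ^ k \<le> (2 * \<bar>x\<bar>) ^ k" by (intro power_mono) auto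
  also have "\<dots> \<le> 2 ^ k * (\<bar>x\<bar> ^ k + \<bar>y\<bar> ^ k)" by (simp add: power_mult_distrib)
  finally show ?thesis .
qed

lemma Lk_add:
  assumes "Lk M k X" "Lk M k Y" shows "Lk M k (\<lambda>\<omega>. X \<omega> + Y \<omega>)"
proof -
  have [measurable]: "X \<in> borel_measurable M" "Y \<in> borel_measurable M" using assms by (auto simp: Lk_def)
  have "integrable M (\<lambda>\<omega>. \<bar>X \<omega> + Y \<omega>\<bar> ^ k)"
  proof (rule Bochner_Integration.integrable_bound[of _ "\<lambda>\<omega>. 2 ^ k * (\<bar>X \<omega>\<bar> ^ k + \<bar>Y \<omega>\<bar> ^ k)"])
    show "integrable M (\<lambda>\<omega>. 2 ^ k * (\<bar>X \<omega>\<bar> ^ k + \<bar>Y \<omega>\<bar> ^ k))" using assms by (auto simp: Lk_def)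
    show "AE x in M. norm (\<bar>X x + Y x\<bar> ^ k) \<le> norm (2 ^ k * (\<bar>X x\<bar> ^ k + \<bar>Y x\<bar> ^ k))"
      by (intro AE_I2) (auto intro!: order_trans[OF abs_add_pow_le])
  qed measurable
  then show ?thesis by (simp add: Lk_def)
qed

lemma Lk_scale:
  assumes "Lk M k X" shows "Lk M k (\<lambda>\<omega>. c * X \<omega>)"
proof -
  have "(\<lambda>\<omega>. \<bar>c * X \<omega>\<bar> ^ k) = (\<lambda>\<omega>. \<bar>c\<bar> ^ k * \<bar>X \<omega>\<bar> ^ k)" by (simp add: abs_mult power_mult_distrib)
  then show ?thesis using assms by (auto simp: Lk_def)
qed

lemma Lnorm_scale:
  assumes "k > 0" shows "Lnorm M k (\<lambda>\<omega>. c * X \<omega>) = \<bar>c\<bar> * Lnorm M k X"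
proof -
  have "(\<lambda>\<omega>. \<bar>c * X \<omega>\<bar> ^ k) = (\<lambda>\<omega>. \<bar>c\<bar> ^ k * \<bar>X \<omega>\<bar> ^ k)" by (simp add: abs_mult power_mult_distrib)
  then have "Lnorm M k (\<lambda>\<omega>. c * X \<omega>) = (\<bar>c\<bar> ^ k * (\<integral>\<omega>. \<bar>X \<omega>\<bar> ^ k \<partial>M)) powr (1 / real k)"
    by (simp add: Lnorm_def)
  also have "\<dots> = (\<bar>c\<bar> ^ k) powr (1 / real k) * Lnorm M k X"
    by (simp add: Lnorm_def powr_mult integral_nonneg_AE)
  also have "\<dots> = \<bar>c\<bar> * Lnorm M k X" using assms by (simp add: pow_powr_inv)
  finally show ?thesis .
qed

lemma Lk_abs: "Lk M k X \<Longrightarrow> Lk M k (\<lambda>\<omega>. \<bar>X \<omega>\<bar>)"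
  by (auto simp: Lk_def)

lemma Lnorm_abs: "Lnorm M k (\<lambda>\<omega>. \<bar>X \<omega>\<bar>) = Lnorm M k X"
  by (simp add: Lnorm_def)

lemma Lk_minus: "Lk M k X \<Longrightarrow> Lk M k (\<lambda>\<omega>. - X \<omega>)"
  by (auto simp: Lk_def)

lemma Lnorm_minus: "Lnorm M k (\<lambda>\<omega>. - X \<omega>) = Lnorm M k X"
  by (simp add: Lnorm_def)

context prob_space
begin

lemma Lk_const: "Lk M k (\<lambda>_. c)"
  by (simp add: Lk_def)

lemma Lnorm_const: "k > 0 \<Longrightarrow> Lnorm M k (\<lambda>_. c) = \<bar>c\<bar>"
  by (simp add: Lnorm_def prob_space pow_powr_inv)

lemma Lnorm_add:
  assumes k: "k \<ge> 2" and X: "Lk M k X" and Y: "Lk M k Y"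
  shows "Lnorm M k (\<lambda>\<omega>. X \<omega> + Y \<omega>) \<le> Lnorm M k X + Lnorm M k Y"
proof -
  have [measurable]: "X \<in> borel_measurable M" "Y \<in> borel_measurable M" using assms by (auto simp: Lk_def)
  have iX: "integrable M (\<lambda>\<omega>. \<bar>X \<omega>\<bar> ^ k)" and iY: "integrable M (\<lambda>\<omega>. \<bar>Y \<omega>\<bar> ^ k)"
    using X Y by (auto simp: Lk_def)
  have iS: "integrable M (\<lambda>\<omega>. \<bar>X \<omega> + Y \<omega>\<bar> ^ k)" using Lk_add[OF X Y] by (simp add: Lk_def)
  define m where "m = (\<integral>\<omega>. \<bar>X \<omega> + Y \<omega>\<bar> ^ k \<partial>M)"
  have m0: "m \<ge> 0" unfolding m_def by (auto intro!: integral_nonneg_AE)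
  have kk: "real (k - 1) / real k + 1 / real k = 1" "1 / real k \<ge> 0" "real (k - 1) / real k \<ge> 0"
    using k by (auto simp: field_simps of_nat_diff)
  have key: "(\<integral>\<omega>. \<bar>Z \<omega>\<bar> * \<bar>X \<omega> + Y \<omega>\<bar> ^ (k - 1) \<partial>M) \<le> Lnorm M k Z * m powr (real (k - 1) / real k)
     \<and> integrable M (\<lambda>\<omega>. \<bar>Z \<omega>\<bar> * \<bar>X \<omega> + Y \<omega>\<bar> ^ (k - 1))"
    if Z: "Lk M k Z" for Z
  proof -
    have [measurable]: "Z \<in> borel_measurable M" using Z by (auto simp: Lk_def)
    have eq: "\<bar>Z \<omega>\<bar> * \<bar>X \<omega> + Y \<omega>\<bar> ^ (k - 1) =
      (\<bar>Z \<omega>\<bar> ^ k) powr (1 / real k) * (\<bar>X \<omega> + Y \<omega>\<bar> ^ k) powr (real (k - 1) / real k)" for \<omega>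
      using k pow_powr_inv[of "\<bar>Z \<omega>\<bar>" k] pow_powr_frac[of "\<bar>X \<omega> + Y \<omega>\<bar>" k "k - 1"] by simp
    have h: "integrable M (\<lambda>\<omega>. (\<bar>Z \<omega>\<bar> ^ k) powr (1 / real k) * (\<bar>X \<omega> + Y \<omega>\<bar> ^ k) powr (real (k - 1) / real k))"
      "(\<integral>\<omega>. (\<bar>Z \<omega>\<bar> ^ k) powr (1 / real k) * (\<bar>X \<omega> + Y \<omega>\<bar> ^ k) powr (real (k - 1) / real k) \<partial>M)
        \<le> (\<integral>\<omega>. \<bar>Z \<omega>\<bar> ^ k \<partial>M) powr (1 / real k) * (\<integral>\<omega>. \<bar>X \<omega> + Y \<omega>\<bar> ^ k \<partial>M) powr (real (k - 1) / real k)"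
      using holder[of M "\<lambda>\<omega>. \<bar>Z \<omega>\<bar> ^ k" "\<lambda>\<omega>. \<bar>X \<omega> + Y \<omega>\<bar> ^ k" "1 / real k" "real (k - 1) / real k"]
        Z iS kk by (auto simp: Lk_def)
    show ?thesis using h unfolding eq by (simp add: Lnorm_def m_def)
  qed
  have pw: "\<bar>X \<omega> + Y \<omega>\<bar> ^ k \<le> \<bar>X \<omega>\<bar> * \<bar>X \<omega> + Y \<omega>\<bar> ^ (k - 1) + \<bar>Y \<omega>\<bar> * \<bar>X \<omega> + Y \<omega>\<bar> ^ (k - 1)" for \<omega>
  proof -
    have "\<bar>X \<omega> + Y \<omega>\<bar> ^ k = \<bar>X \<omega> + Y \<omega>\<bar> * \<bar>X \<omega> + Y \<omega>\<bar> ^ (k - 1)"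
      using k by (metis Suc_diff_1 less_le_trans pos2 power_Suc)
    also have "\<dots> \<le> (\<bar>X \<omega>\<bar> + \<bar>Y \<omega>\<bar>) * \<bar>X \<omega> + Y \<omega>\<bar> ^ (k - 1)"
      by (intro mult_right_mono) auto
    finally show ?thesis by (simp add: distrib_right)
  qed
  have "m \<le> (\<integral>\<omega>. \<bar>X \<omega>\<bar> * \<bar>X \<omega> + Y \<omega>\<bar> ^ (k - 1) + \<bar>Y \<omega>\<bar> * \<bar>X \<omega> + Y \<omega>\<bar> ^ (k - 1) \<partial>M)"
    unfolding m_def using key[OF X] key[OF Y] iS pw by (intro integral_mono) auto
  also have "\<dots> = (\<integral>\<omega>. \<bar>X \<omega>\<bar> * \<bar>X \<omega> + Y \<omega>\<bar> ^ (k - 1) \<partial>M) + (\<integral>\<omega>. \<bar>Y \<omega>\<bar> * \<bar>X \<omega> + Y \<omega>\<bar> ^ (k - 1) \<partial>M)"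
    using key[OF X] key[OF Y] by (intro Bochner_Integration.integral_add) auto
  also have "\<dots> \<le> (Lnorm M k X + Lnorm M k Y) * m powr (real (k - 1) / real k)"
    using key[OF X] key[OF Y] by (simp add: distrib_right)
  finally have le: "m \<le> (Lnorm M k X + Lnorm M k Y) * m powr (real (k - 1) / real k)" .
  show ?thesis
  proof (cases "m = 0")
    case True
    then show ?thesis by (simp add: Lnorm_def m_def[symmetric] Lnorm_nonneg add_nonneg_nonneg)
  next
    case False
    then have mp: "m > 0" using m0 by auto
    have "m = m powr (1 / real k) * m powr (real (k - 1) / real k)"
      using mp kk(1) by (simp add: powr_add[symmetric] add.commute)
    with le have "m powr (1 / real k) * m powr (real (k - 1) / real k) \<le> (Lnorm M k X + Lnorm M k Y) * m powr (real (k - 1) / real k)"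
      by simp
    then have "m powr (1 / real k) \<le> Lnorm M k X + Lnorm M k Y"
      using mp by (simp add: mult_le_cancel_right)
    then show ?thesis by (simp add: Lnorm_def m_def)
  qed
qed

lemma Lk_sum:
  assumes "finite A" "\<And>x. x \<in> A \<Longrightarrow> Lk M k (X x)"
  shows "Lk M k (\<lambda>\<omega>. \<Sum>x\<in>A. X x \<omega>)"
  using assms
proof (induction A rule: finite_induct)
  case empty then show ?case using Lk_const[of k 0] by simp
next
  case (insert a A)
  then show ?case using Lk_add[of M k "X a" "\<lambda>\<omega>. \<Sum>x\<in>A. X x \<omega>"] by simp
qed

end


lemma choose_bound:
  "2 * ((m + 2) choose (i + 2)) \<le> (m + 2) * (m + 1) * (m choose i)"
proof -
  define A where "A = (Suc (Suc m) choose Suc (Suc i))"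
  define B where "B = (Suc m choose Suc i)"
  define C where "C = (m choose i)"
  have e1: "Suc (Suc i) * A = Suc (Suc m) * B"
    unfolding A_def B_def by (rule Suc_times_binomial)
  have e2: "Suc i * B = Suc m * C"
    unfolding B_def C_def by (rule Suc_times_binomial)
  have "Suc (Suc i) * Suc i * A = Suc i * (Suc (Suc i) * A)" by (simp only: ac_simps)
  also have "\<dots> = Suc (Suc m) * (Suc i * B)" using e1 by (simp only: ac_simps)
  also have "\<dots> = Suc (Suc m) * Suc m * C" using e2 by (simp only: ac_simps)
  finally have E: "Suc (Suc i) * Suc i * A = Suc (Suc m) * Suc m * C" .
  have "2 * A \<le> Suc (Suc i) * Suc i * A" by (intro mult_right_mono) auto
  then have "2 * A \<le> Suc (Suc m) * Suc m * C" using E by simp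
  moreover have "(m + 2) choose (i + 2) = A" unfolding A_def by (simp add: numeral_2_eq_2 del: binomial_Suc_Suc)
  ultimately show ?thesis by (simp add: C_def numeral_2_eq_2 del: binomial_Suc_Suc)
qed

lemma binom_rem:
  fixes x y :: real assumes x: "x \<ge> 0"
  shows "(x + y) ^ (m + 2) \<le> x ^ (m + 2) + real (m + 2) * x ^ (m + 1) * y
           + (real (m + 2) * real (m + 1) / 2) * y\<^sup>2 * (x + \<bar>y\<bar>) ^ m"
proof -
  define f where "f j = real ((m + 2) choose j) * y ^ j * x ^ (m + 2 - j)" for j
  have "(x + y) ^ (m + 2) = (\<Sum>j\<le>m + 2. f j)"
    using binomial_ring[of y x "m + 2"] by (simp add: f_def add.commute)
  also have "\<dots> = f 0 + (f 1 + (\<Sum>i\<le>m. f (i + 2)))"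
    by (simp add: sum.atMost_Suc_shift numeral_2_eq_2 del: sum.atMost_Suc)
  also have "f 0 = x ^ (m + 2)" by (simp add: f_def)
  also have "f 1 = real (m + 2) * x ^ (m + 1) * y" by (simp add: f_def)
  also have "(\<Sum>i\<le>m. f (i + 2)) \<le> (\<Sum>i\<le>m. (real (m + 2) * real (m + 1) / 2) * y\<^sup>2 * (real (m choose i) * \<bar>y\<bar> ^ i * x ^ (m - i)))"
  proof (intro sum_mono)
    fix i assume "i \<in> {..m}"
    have c: "real ((m + 2) choose (i + 2)) \<le> real (m + 2) * real (m + 1) / 2 * real (m choose i)"
    proof -
      have "real (2 * ((m + 2) choose (i + 2))) \<le> real ((m + 2) * (m + 1) * (m choose i))"
        by (simp only: of_nat_le_iff) (rule choose_bound)
      then show ?thesis by (simp del: binomial_Suc_Suc add: algebra_simps)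
    qed
    have "f (i + 2) \<le> real ((m + 2) choose (i + 2)) * (y\<^sup>2 * \<bar>y\<bar> ^ i) * x ^ (m - i)"
    proof -
      have "y ^ (i + 2) \<le> y\<^sup>2 * \<bar>y\<bar> ^ i"
        by (metis abs_ge_self abs_power2 add.commute power_abs power_add)
      moreover have "x ^ (m + 2 - (i + 2)) = x ^ (m - i)" by simp
      ultimately show ?thesis unfolding f_def using x by (simp only:) (intro mult_right_mono mult_left_mono, auto)
    qed
    also have "\<dots> \<le> (real (m + 2) * real (m + 1) / 2 * real (m choose i)) * (y\<^sup>2 * \<bar>y\<bar> ^ i) * x ^ (m - i)"
      using c x by (intro mult_right_mono) auto
    finally show "f (i + 2) \<le> (real (m + 2) * real (m + 1) / 2) * y\<^sup>2 * (real (m choose i) * \<bar>y\<bar> ^ i * x ^ (m - i))"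
      by (simp add: ac_simps)
  qed
  also have "\<dots> = (real (m + 2) * real (m + 1) / 2) * y\<^sup>2 * (x + \<bar>y\<bar>) ^ m"
    using binomial_ring[of "\<bar>y\<bar>" x m] by (simp add: sum_distrib_left add.commute)
  finally show ?thesis by simp
qed

lemma bern_low:
  fixes x b :: real assumes "x \<ge> 0" "b \<ge> 0"
  shows "(x + b) ^ Suc m \<ge> b ^ Suc m + real (Suc m) * x * b ^ m"
proof (induction m)
  case 0 then show ?case by simp
next
  case (Suc m)
  have "(x + b) ^ Suc (Suc m) = (x + b) * (x + b) ^ Suc m" by simp
  also have "\<dots> \<ge> (x + b) * (b ^ Suc m + real (Suc m) * x * b ^ m)"
    using Suc assms by (intro mult_left_mono) auto
  finally have "(x + b) ^ Suc (Suc m) \<ge> (x + b) * (b ^ Suc m + real (Suc m) * x * b ^ m)" .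
  moreover have "(x + b) * (b ^ Suc m + real (Suc m) * x * b ^ m) \<ge> b ^ Suc (Suc m) + real (Suc (Suc m)) * x * b ^ Suc m"
  proof -
    have "(x + b) * (b ^ Suc m + real (Suc m) * x * b ^ m) =
      b ^ Suc (Suc m) + real (Suc (Suc m)) * x * b ^ Suc m + real (Suc m) * x * x * b ^ m"
      by (simp add: algebra_simps)
    moreover have "real (Suc m) * x * x * b ^ m \<ge> 0" using assms by simp
    ultimately show ?thesis by linarith
  qed
  ultimately show ?case by linarith
qed

lemma pw_ineq0:
  fixes x y :: real assumes x: "x \<ge> 0" and k: "k \<ge> 2"
  shows "\<bar>x + y\<bar> ^ k \<le> \<bar>x\<bar> ^ k + real k * (\<bar>x\<bar> ^ (k - 2) * x * y)
           + (real k * (real k - 1) / 2) * (\<bar>x\<bar> + \<bar>y\<bar>) ^ (k - 2) * y\<^sup>2"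
proof -
  obtain m where m: "k = m + 2" using k by (metis add.commute le_Suc_ex)
  have xx: "\<bar>x\<bar> ^ m * x = x ^ (m + 1)" using x by simp
  have c: "real k * (real k - 1) / 2 = real (m + 2) * real (m + 1) / 2" using m by simp
  show ?thesis
  proof (cases "even k \<or> x + y \<ge> 0")
    case True
    then have "\<bar>x + y\<bar> ^ k = (x + y) ^ k"
      by (metis abs_of_nonneg power_even_abs)
    then show ?thesis using binom_rem[OF x, of y m] x m xx c
      by (simp add: ac_simps)
  next
    case False
    then have odd: "odd k" and neg: "x + y < 0" by auto
    then have m1: "m \<ge> 1" using m by (cases m) auto
    then obtain m' where m': "m = Suc m'" by (cases m) auto
    define b where "b = - y"
    have bx: "x < b" using neg b_def by simp
    have b0: "b \<ge> 0" using bx x by simp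
    have "\<bar>x + y\<bar> = b - x" using neg b_def by simp
    then have "\<bar>x + y\<bar> ^ k = (b - x) ^ k" by simp
    also have "\<dots> \<le> b ^ (m + 2)" unfolding m using bx x by (intro power_mono) auto
    finally have L: "\<bar>x + y\<bar> ^ k \<le> b ^ (m + 2)" .
    have A: "x ^ (m + 1) * b \<le> x * b ^ (m + 1)"
    proof -
      have "x ^ m \<le> b ^ m" using bx x by (intro power_mono) auto
      then have "x * x ^ m * b \<le> x * b ^ m * b" using x b0 by (intro mult_right_mono mult_left_mono) auto
      then show ?thesis by (simp add: ac_simps)
    qed
    have B: "(x + b) ^ m \<ge> b ^ m + real m * x * b ^ m'"
      using bern_low[OF x b0, of m'] m' by simp
    define c0 where "c0 = real (m + 2) * real (m + 1) / 2"
    have c1: "1 \<le> c0" unfolding c0_def by (simp add: field_simps)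
    have c2: "real (m + 2) \<le> c0 * real m"
    proof -
      have "real m \<ge> 1" using m1 by simp
      then have "(1 + real m) * real m \<ge> 2 * 1" by (intro mult_mono) auto
      then have "real (m + 2) * 2 \<le> real (m + 2) * (real (m + 1) * real m)"
        by (intro mult_left_mono) (auto simp: add.commute)
      then show ?thesis unfolding c0_def by (simp add: field_simps)
    qed
    have bb: "b ^ m' * b\<^sup>2 = b ^ (m + 1)" using m' by (simp add: power2_eq_square)
    have R: "c0 * (x + \<bar>y\<bar>) ^ m * y\<^sup>2 \<ge> c0 * b ^ (m + 2) + c0 * real m * x * b ^ (m + 1)"
    proof -
      have "c0 * (x + \<bar>y\<bar>) ^ m * y\<^sup>2 = c0 * (x + b) ^ m * b\<^sup>2" using b0 b_def by simp
      also have "\<dots> \<ge> c0 * (b ^ m + real m * x * b ^ m') * b\<^sup>2"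
        using B c1 by (intro mult_right_mono mult_left_mono) auto
      also have "c0 * (b ^ m + real m * x * b ^ m') * b\<^sup>2 = c0 * (b ^ m * b\<^sup>2) + c0 * real m * x * (b ^ m' * b\<^sup>2)"
        by (simp add: algebra_simps)
      also have "b ^ m * b\<^sup>2 = b ^ (m + 2)" by (simp add: power_add power2_eq_square)
      finally show ?thesis using bb by simp
    qed
    have T1: "b ^ (m + 2) \<le> c0 * b ^ (m + 2)" using c1 b0 by (intro mult_right_mono[of 1 c0, simplified]) auto
    have T2: "real (m + 2) * (x * b ^ (m + 1)) \<le> c0 * real m * (x * b ^ (m + 1))"
      using c2 x b0 by (intro mult_right_mono) auto
    have T3: "real (m + 2) * (x ^ (m + 1) * b) \<le> real (m + 2) * (x * b ^ (m + 1))"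
      using A by (intro mult_left_mono) auto
    have xk: "\<bar>x\<bar> ^ k \<ge> 0" by simp
    have Q2: "real k * (\<bar>x\<bar> ^ (k - 2) * x * y) = - (real (m + 2) * (x ^ (m + 1) * b))"
      using x m b_def by (simp add: abs_of_nonneg algebra_simps)
    have Q3: "(real k * (real k - 1) / 2) * (\<bar>x\<bar> + \<bar>y\<bar>) ^ (k - 2) * y\<^sup>2 = c0 * (x + \<bar>y\<bar>) ^ m * y\<^sup>2"
      using x m c by (simp add: c0_def)
    have R': "c0 * real m * x * b ^ (m + 1) = c0 * real m * (x * b ^ (m + 1))" by (simp add: ac_simps)
    show ?thesis unfolding Q2 Q3 using L R T1 T2 T3 xk R' by linarith
  qed
qed

lemma pw_ineq:
  fixes x y :: real assumes k: "k \<ge> 2"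
  shows "\<bar>x + y\<bar> ^ k \<le> \<bar>x\<bar> ^ k + real k * (\<bar>x\<bar> ^ (k - 2) * x * y)
           + (real k * (real k - 1) / 2) * (\<bar>x\<bar> + \<bar>y\<bar>) ^ (k - 2) * y\<^sup>2"
proof (cases "x \<ge> 0")
  case True then show ?thesis using pw_ineq0[OF True k] by simp
next
  case False
  then have "- x \<ge> 0" by simp
  from pw_ineq0[OF this k, of "- y"] show ?thesis
    by (simp add: abs_minus_commute) (metis abs_minus add.commute minus_add_distrib)
qed


lemma scalar_step:
  fixes a s d :: real
  assumes k: "k \<ge> 2" and a0: "a \<ge> 0" and s0: "s \<ge> 0" and d0: "d \<ge> 0" and asd: "a \<le> s + d"
    and ak: "a ^ k \<le> s ^ k + (real k * (real k - 1) / 2) * (s + d) ^ (k - 2) * d\<^sup>2"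
  shows "a\<^sup>2 \<le> s\<^sup>2 + 6 * real k * d\<^sup>2"
proof (cases "s \<le> real k * d")
  case True
  have "a\<^sup>2 \<le> (s + d)\<^sup>2" using a0 asd by (intro power_mono) auto
  also have "\<dots> = s\<^sup>2 + 2 * (s * d) + d\<^sup>2" by (simp add: power2_eq_square algebra_simps)
  finally have A1: "a\<^sup>2 \<le> s\<^sup>2 + 2 * (s * d) + d\<^sup>2" .
  have A2: "s * d \<le> real k * d\<^sup>2" using True d0 mult_right_mono[OF True d0] by (simp add: power2_eq_square)
  have A3: "d\<^sup>2 \<le> real k * d\<^sup>2" using k by (intro mult_right_mono[of 1 "real k", simplified]) auto
  have A4: "6 * real k * d\<^sup>2 = 6 * (real k * d\<^sup>2)" by simp
  have A5: "0 \<le> real k * d\<^sup>2" by simp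
  show ?thesis unfolding A4 using A1 A2 A3 A5 by linarith
next
  case False
  then have kd: "real k * d < s" by simp
  have sp: "s > 0" using kd k d0 by (smt (verit) mult_nonneg_nonneg of_nat_0_le_iff)
  define t where "t = d / s"
  have t0: "t \<ge> 0" using d0 sp by (simp add: t_def)
  have kt: "real k * t < 1" using kd sp by (simp add: t_def field_simps)
  have dt: "d = s * t" using sp by (simp add: t_def)
  have E1: "(1 + t) ^ (k - 2) \<le> 3"
  proof -
    have "(1 + t) ^ (k - 2) \<le> exp t ^ (k - 2)" using t0 by (intro power_mono) auto
    also have "\<dots> = exp (real (k - 2) * t)" by (simp add: exp_of_nat_mult)
    also have "\<dots> \<le> exp 1"
    proof -
      have "real (k - 2) * t \<le> real k * t" using t0 by (intro mult_right_mono) auto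
      then show ?thesis using kt by simp
    qed
    also have "\<dots> \<le> 3" by (rule exp_le)
    finally show ?thesis .
  qed
  have kk: "real k * (real k - 1) / 2 \<le> real k ^ 2 / 2" using k by (simp add: power2_eq_square algebra_simps)
  have sk: "s ^ k = s ^ (k - 2) * s\<^sup>2"
  proof -
    have "(k - 2) + 2 = k" using k by simp
    then have "s ^ k = s ^ ((k - 2) + 2)" by (simp only:)
    then show ?thesis by (simp only: power_add)
  qed
  define u where "u = 3 / 2 * real k ^ 2 * t\<^sup>2"
  have u0: "u \<ge> 0" by (simp add: u_def)
  have ktt: "(real k * t)\<^sup>2 \<le> 1" using kt t0 k
    by (metis abs_le_square_iff abs_of_nonneg less_le mult_nonneg_nonneg of_nat_0_le_iff one_power2 zero_le_one)
  have u1: "u \<le> 2" using ktt by (simp add: u_def power_mult_distrib)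
  have "a ^ k \<le> s ^ k + (real k ^ 2 / 2) * (s ^ (k - 2) * 3) * d\<^sup>2"
  proof -
    have "(s + d) ^ (k - 2) = s ^ (k - 2) * (1 + t) ^ (k - 2)"
      by (simp add: dt power_mult_distrib[symmetric] algebra_simps)
    also have "\<dots> \<le> s ^ (k - 2) * 3" using E1 sp by (intro mult_left_mono) auto
    finally have "(s + d) ^ (k - 2) \<le> s ^ (k - 2) * 3" .
    then have "(real k * (real k - 1) / 2) * (s + d) ^ (k - 2) * d\<^sup>2 \<le> (real k ^ 2 / 2) * (s ^ (k - 2) * 3) * d\<^sup>2"
      using kk k sp d0 by (intro mult_right_mono mult_mono) auto
    then show ?thesis using ak by linarith
  qed
  also have "\<dots> = s ^ k * (1 + u)"
    unfolding sk u_def dt by (simp add: power2_eq_square algebra_simps)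
  finally have au: "a ^ k \<le> s ^ k * (1 + u)" .
  define v where "v = 6 * real k * t\<^sup>2"
  have v: "real k * v = 4 * u" by (simp add: u_def v_def power2_eq_square algebra_simps)
  have "(a\<^sup>2) ^ k = (a ^ k)\<^sup>2" by (simp add: power_mult[symmetric] mult.commute)
  also have "\<dots> \<le> (s ^ k * (1 + u))\<^sup>2" using au a0 by (intro power_mono) auto
  also have "\<dots> = (s\<^sup>2) ^ k * (1 + u)\<^sup>2" by (simp add: power_mult_distrib power_mult[symmetric] mult.commute)
  finally have c1: "(a\<^sup>2) ^ k \<le> (s\<^sup>2) ^ k * (1 + u)\<^sup>2" .
  have c2a: "(1 + u)\<^sup>2 \<le> 1 + real k * v"
  proof -
    have "u * u \<le> 2 * u" using u0 u1 by (intro mult_right_mono) auto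
    then show ?thesis unfolding v by (simp add: power2_eq_square algebra_simps)
  qed
  have c2b: "1 + real k * v \<le> (1 + v) ^ k"
  proof -
    have "v \<ge> 0" by (simp add: v_def)
    then have "-1 \<le> v" by linarith
    then show ?thesis using Bernoulli_inequality[of v k] by simp
  qed
  have c3: "(s\<^sup>2) ^ k * (1 + u)\<^sup>2 \<le> (s\<^sup>2) ^ k * (1 + v) ^ k"
    using c2a c2b by (intro mult_left_mono) auto
  have c4: "(s\<^sup>2) ^ k * (1 + v) ^ k = (s\<^sup>2 * (1 + v)) ^ k" by (simp only: power_mult_distrib)
  have c5: "(a\<^sup>2) ^ k \<le> (s\<^sup>2 * (1 + v)) ^ k" using c1 c3 c4 by linarith
  have c6: "s\<^sup>2 * (1 + v) \<ge> 0" by (simp add: v_def)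
  obtain k' where k': "k = Suc k'" using k by (cases k) auto
  have "a\<^sup>2 \<le> s\<^sup>2 * (1 + v)"
    using power_le_imp_le_base[of "a\<^sup>2" k' "s\<^sup>2 * (1 + v)"] c5 c6 k' by simp
  also have "\<dots> = s\<^sup>2 + 6 * real k * d\<^sup>2"
    by (simp add: v_def dt power2_eq_square algebra_simps)
  finally show ?thesis .
qed


lemma pow_powr_frac_pos:
  fixes t :: real assumes "t > 0" "k > 0"
  shows "(t ^ k) powr (real j / real k) = t ^ j"
proof -
  have "(t ^ k) powr (real j / real k) = (t powr real k) powr (real j / real k)"
    using assms by (simp add: powr_realpow)
  also have "\<dots> = t powr real j" using assms by (simp add: powr_powr)
  also have "\<dots> = t ^ j" using assms by (simp add: powr_realpow)
  finally show ?thesis .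
qed

context prob_space
begin

lemma step_ineq:
  assumes k: "k \<ge> 2" and S: "Lk M k S" and D: "Lk M k D"
    and orth: "(\<integral>\<omega>. \<bar>S \<omega>\<bar> ^ (k - 2) * S \<omega> * D \<omega> \<partial>M) = 0"
  shows "(Lnorm M k (\<lambda>\<omega>. S \<omega> + D \<omega>))\<^sup>2 \<le> (Lnorm M k S)\<^sup>2 + 6 * real k * (Lnorm M k D)\<^sup>2"
proof -
  have [measurable]: "S \<in> borel_measurable M" "D \<in> borel_measurable M" using S D by (auto simp: Lk_def)
  define A where "A \<omega> = \<bar>S \<omega>\<bar> + \<bar>D \<omega>\<bar>" for \<omega>
  have [measurable]: "A \<in> borel_measurable M" unfolding A_def by measurable
  have A0: "A \<omega> \<ge> 0" for \<omega> by (simp add: A_def)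
  have LA: "Lk M k A" unfolding A_def by (intro Lk_add Lk_abs S D)
  define s where "s = Lnorm M k S"
  define d where "d = Lnorm M k D"
  define a where "a = Lnorm M k (\<lambda>\<omega>. S \<omega> + D \<omega>)"
  have s0: "s \<ge> 0" and d0: "d \<ge> 0" and a0: "a \<ge> 0" by (simp_all add: s_def d_def a_def Lnorm_nonneg)
  have nA: "Lnorm M k A \<le> s + d"
    using Lnorm_add[OF k Lk_abs[OF S] Lk_abs[OF D]] unfolding A_def s_def d_def Lnorm_abs .
  have asd: "a \<le> s + d" unfolding a_def s_def d_def by (rule Lnorm_add[OF k S D])
  have iA: "integrable M (\<lambda>\<omega>. A \<omega> ^ k)" using LA A0 by (simp add: Lk_def)
  have iS: "integrable M (\<lambda>\<omega>. \<bar>S \<omega>\<bar> ^ k)" using S by (simp add: Lk_def)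
  have iD: "integrable M (\<lambda>\<omega>. \<bar>D \<omega>\<bar> ^ k)" using D by (simp add: Lk_def)
  have iSD: "integrable M (\<lambda>\<omega>. \<bar>S \<omega> + D \<omega>\<bar> ^ k)" using Lk_add[OF S D] by (simp add: Lk_def)
  have Ak: "A \<omega> ^ (k - 2) * A \<omega> * A \<omega> = A \<omega> ^ k" for \<omega>
  proof -
    have "k = Suc (Suc (k - 2))" using k by simp
    then show ?thesis by (metis mult.commute power_Suc)
  qed
  have SA: "\<bar>S \<omega>\<bar> \<le> A \<omega>" and DA: "\<bar>D \<omega>\<bar> \<le> A \<omega>" for \<omega> by (simp_all add: A_def)
  have i2: "integrable M (\<lambda>\<omega>. \<bar>S \<omega>\<bar> ^ (k - 2) * S \<omega> * D \<omega>)"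
  proof (rule Bochner_Integration.integrable_bound[OF iA])
    show "AE \<omega> in M. norm (\<bar>S \<omega>\<bar> ^ (k - 2) * S \<omega> * D \<omega>) \<le> norm (A \<omega> ^ k)"
    proof (intro AE_I2)
      fix \<omega>
      have "norm (\<bar>S \<omega>\<bar> ^ (k - 2) * S \<omega> * D \<omega>) = \<bar>S \<omega>\<bar> ^ (k - 2) * \<bar>S \<omega>\<bar> * \<bar>D \<omega>\<bar>"
        by (simp add: abs_mult)
      also have "\<dots> \<le> A \<omega> ^ (k - 2) * A \<omega> * A \<omega>"
        using SA[of \<omega>] DA[of \<omega>] A0[of \<omega>] by (intro mult_mono power_mono) auto
      finally show "norm (\<bar>S \<omega>\<bar> ^ (k - 2) * S \<omega> * D \<omega>) \<le> norm (A \<omega> ^ k)" using Ak A0 by simp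
    qed
  qed measurable
  define h where "h \<omega> = A \<omega> ^ (k - 2) * (D \<omega>)\<^sup>2" for \<omega>
  have [measurable]: "h \<in> borel_measurable M" unfolding h_def by measurable
  have hA: "h \<omega> \<le> A \<omega> ^ k" for \<omega>
  proof -
    have "h \<omega> = A \<omega> ^ (k - 2) * \<bar>D \<omega>\<bar> * \<bar>D \<omega>\<bar>" by (simp add: h_def power2_eq_square)
    also have "\<dots> \<le> A \<omega> ^ (k - 2) * A \<omega> * A \<omega>"
      using DA[of \<omega>] A0[of \<omega>] by (intro mult_mono) auto
    finally show ?thesis using Ak by simp
  qed
  have h0: "h \<omega> \<ge> 0" for \<omega> using A0 by (simp add: h_def)
  have i3: "integrable M h"
    by (rule Bochner_Integration.integrable_bound[OF iA]) (use hA h0 A0 in auto)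
  define c where "c = real k * (real k - 1) / 2"
  have pw: "\<bar>S \<omega> + D \<omega>\<bar> ^ k \<le> \<bar>S \<omega>\<bar> ^ k + real k * (\<bar>S \<omega>\<bar> ^ (k - 2) * S \<omega> * D \<omega>) + c * h \<omega>" for \<omega>
    using pw_ineq[OF k, of "S \<omega>" "D \<omega>"] by (simp add: c_def h_def A_def mult.assoc)
  have "a ^ k = (\<integral>\<omega>. \<bar>S \<omega> + D \<omega>\<bar> ^ k \<partial>M)" unfolding a_def using k by (simp add: Lnorm_pow)
  also have "\<dots> \<le> (\<integral>\<omega>. \<bar>S \<omega>\<bar> ^ k + real k * (\<bar>S \<omega>\<bar> ^ (k - 2) * S \<omega> * D \<omega>) + c * h \<omega> \<partial>M)"
    using iSD iS i2 i3 pw by (intro integral_mono) auto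
  also have "\<dots> = (\<integral>\<omega>. \<bar>S \<omega>\<bar> ^ k \<partial>M) + real k * (\<integral>\<omega>. \<bar>S \<omega>\<bar> ^ (k - 2) * S \<omega> * D \<omega> \<partial>M) + c * (\<integral>\<omega>. h \<omega> \<partial>M)"
    using iS i2 i3 by simp
  also have "\<dots> = s ^ k + c * (\<integral>\<omega>. h \<omega> \<partial>M)" using orth k by (simp add: s_def Lnorm_pow)
  finally have ak1: "a ^ k \<le> s ^ k + c * (\<integral>\<omega>. h \<omega> \<partial>M)" .
  have kk: "real (k - 2) / real k + 2 / real k = 1" "real (k - 2) / real k \<ge> 0" "2 / real k \<ge> 0"
    using k by (auto simp: field_simps of_nat_diff)
  have Hol: "integrable M (\<lambda>\<omega>. (A \<omega> ^ k) powr (real (k - 2) / real k) * (\<bar>D \<omega>\<bar> ^ k) powr (2 / real k))"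
    "(\<integral>\<omega>. (A \<omega> ^ k) powr (real (k - 2) / real k) * (\<bar>D \<omega>\<bar> ^ k) powr (2 / real k) \<partial>M)
      \<le> (\<integral>\<omega>. A \<omega> ^ k \<partial>M) powr (real (k - 2) / real k) * (\<integral>\<omega>. \<bar>D \<omega>\<bar> ^ k \<partial>M) powr (2 / real k)"
    using holder[of M "\<lambda>\<omega>. A \<omega> ^ k" "\<lambda>\<omega>. \<bar>D \<omega>\<bar> ^ k" "real (k - 2) / real k" "2 / real k"] iA iD kk A0
    by auto
  have hpw: "h \<omega> \<le> (A \<omega> ^ k) powr (real (k - 2) / real k) * (\<bar>D \<omega>\<bar> ^ k) powr (2 / real k)" for \<omega>
  proof (cases "A \<omega> = 0")
    case True
    then have "D \<omega> = 0" using DA[of \<omega>] by simp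
    then show ?thesis by (simp add: h_def)
  next
    case False
    then have Ap: "A \<omega> > 0" using A0[of \<omega>] by simp
    have "(A \<omega> ^ k) powr (real (k - 2) / real k) = A \<omega> ^ (k - 2)"
      using pow_powr_frac_pos[OF Ap, of k "k - 2"] k by simp
    moreover have "(\<bar>D \<omega>\<bar> ^ k) powr (2 / real k) = (D \<omega>)\<^sup>2"
      using pow_powr_frac[of "\<bar>D \<omega>\<bar>" k 2] k by simp
    ultimately show ?thesis by (simp add: h_def)
  qed
  have "(\<integral>\<omega>. h \<omega> \<partial>M) \<le> (\<integral>\<omega>. A \<omega> ^ k \<partial>M) powr (real (k - 2) / real k) * (\<integral>\<omega>. \<bar>D \<omega>\<bar> ^ k \<partial>M) powr (2 / real k)"
    using integral_mono[OF i3 Hol(1) hpw] Hol(2) by linarith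
  also have "\<dots> \<le> (s + d) ^ (k - 2) * d\<^sup>2"
  proof (rule mult_mono)
    have "(\<integral>\<omega>. A \<omega> ^ k \<partial>M) powr (real (k - 2) / real k) \<le> ((\<integral>\<omega>. A \<omega> ^ k \<partial>M) powr (1 / real k)) ^ (k - 2)"
      using k by (intro powr_frac_le_pow) (auto intro!: integral_nonneg_AE simp: A0)
    also have "(\<integral>\<omega>. A \<omega> ^ k \<partial>M) powr (1 / real k) = Lnorm M k A"
      using A0 by (simp add: Lnorm_def)
    also have "\<dots> ^ (k - 2) \<le> (s + d) ^ (k - 2)"
      using nA by (intro power_mono) (auto simp: Lnorm_nonneg)
    finally show "(\<integral>\<omega>. A \<omega> ^ k \<partial>M) powr (real (k - 2) / real k) \<le> (s + d) ^ (k - 2)" .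
    have "(\<integral>\<omega>. \<bar>D \<omega>\<bar> ^ k \<partial>M) powr (real 2 / real k) \<le> ((\<integral>\<omega>. \<bar>D \<omega>\<bar> ^ k \<partial>M) powr (1 / real k)) ^ 2"
      using k by (intro powr_frac_le_pow) (auto intro!: integral_nonneg_AE)
    then show "(\<integral>\<omega>. \<bar>D \<omega>\<bar> ^ k \<partial>M) powr (2 / real k) \<le> d\<^sup>2" by (simp add: d_def Lnorm_def)
    show "0 \<le> (\<integral>\<omega>. \<bar>D \<omega>\<bar> ^ k \<partial>M) powr (2 / real k)" by simp
    show "0 \<le> (s + d) ^ (k - 2)" using s0 d0 by simp
  qed
  finally have hb: "(\<integral>\<omega>. h \<omega> \<partial>M) \<le> (s + d) ^ (k - 2) * d\<^sup>2" .
  have c0: "c \<ge> 0" using k by (simp add: c_def)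
  have "a ^ k \<le> s ^ k + c * (s + d) ^ (k - 2) * d\<^sup>2"
    using ak1 mult_left_mono[OF hb c0] by (simp add: mult.assoc)
  then have "a\<^sup>2 \<le> s\<^sup>2 + 6 * real k * d\<^sup>2"
    using scalar_step[OF k a0 s0 d0 asd] by (simp add: c_def)
  then show ?thesis by (simp add: a_def s_def d_def)
qed

lemma mart_ineq:
  fixes m :: nat and D :: "nat \<Rightarrow> 'a \<Rightarrow> real"
  assumes k: "k \<ge> 2"
    and LD: "\<And>l. l \<in> {1..m} \<Longrightarrow> Lk M k (D l)"
    and orth: "\<And>l. l \<in> {1..m} \<Longrightarrow>
      (\<integral>\<omega>. \<bar>\<Sum>r\<in>{1..<l}. D r \<omega>\<bar> ^ (k - 2) * (\<Sum>r\<in>{1..<l}. D r \<omega>) * D l \<omega> \<partial>M) = 0"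
  shows "Lk M k (\<lambda>\<omega>. \<Sum>l\<in>{1..m}. D l \<omega>) \<and>
         (Lnorm M k (\<lambda>\<omega>. \<Sum>l\<in>{1..m}. D l \<omega>))\<^sup>2 \<le> 6 * real k * (\<Sum>l\<in>{1..m}. (Lnorm M k (D l))\<^sup>2)"
  using LD orth
proof (induction m)
  case 0
  then show ?case using Lk_const[of k 0] Lnorm_const[of k 0] k by simp
next
  case (Suc m)
  have IH: "Lk M k (\<lambda>\<omega>. \<Sum>l\<in>{1..m}. D l \<omega>) \<and>
         (Lnorm M k (\<lambda>\<omega>. \<Sum>l\<in>{1..m}. D l \<omega>))\<^sup>2 \<le> 6 * real k * (\<Sum>l\<in>{1..m}. (Lnorm M k (D l))\<^sup>2)"
    using Suc.IH Suc.prems by auto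
  have LDs: "Lk M k (D (Suc m))" using Suc.prems by auto
  have o: "(\<integral>\<omega>. \<bar>\<Sum>r\<in>{1..m}. D r \<omega>\<bar> ^ (k - 2) * (\<Sum>r\<in>{1..m}. D r \<omega>) * D (Suc m) \<omega> \<partial>M) = 0"
    using Suc.prems(2)[of "Suc m"] by (simp add: atLeastLessThanSuc_atLeastAtMost)
  have eq: "(\<lambda>\<omega>. \<Sum>l\<in>{1..Suc m}. D l \<omega>) = (\<lambda>\<omega>. (\<Sum>l\<in>{1..m}. D l \<omega>) + D (Suc m) \<omega>)"
    by (simp add: sum.cl_ivl_Suc)
  have "(Lnorm M k (\<lambda>\<omega>. (\<Sum>l\<in>{1..m}. D l \<omega>) + D (Suc m) \<omega>))\<^sup>2
     \<le> (Lnorm M k (\<lambda>\<omega>. \<Sum>l\<in>{1..m}. D l \<omega>))\<^sup>2 + 6 * real k * (Lnorm M k (D (Suc m)))\<^sup>2"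
    by (rule step_ineq[OF k _ LDs o]) (use IH in auto)
  also have "\<dots> \<le> 6 * real k * (\<Sum>l\<in>{1..Suc m}. (Lnorm M k (D l))\<^sup>2)"
    using IH by (simp add: sum.cl_ivl_Suc algebra_simps)
  finally show ?case unfolding eq using Lk_add[of M k _ "D (Suc m)"] IH LDs by auto
qed

end


context prob_space
begin

lemma mixed_int:
  assumes k: "k \<ge> 2" and X: "Lk M k X" and Y: "Lk M k Y"
  shows "integrable M (\<lambda>\<omega>. \<bar>X \<omega>\<bar> ^ (k - 2) * X \<omega> * Y \<omega>)"
proof -
  have [measurable]: "X \<in> borel_measurable M" "Y \<in> borel_measurable M" using X Y by (auto simp: Lk_def)
  define A where "A \<omega> = \<bar>X \<omega>\<bar> + \<bar>Y \<omega>\<bar>" for \<omega>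
  have [measurable]: "A \<in> borel_measurable M" unfolding A_def by measurable
  have A0: "A \<omega> \<ge> 0" for \<omega> by (simp add: A_def)
  have LA: "Lk M k A" unfolding A_def by (intro Lk_add Lk_abs X Y)
  have iA: "integrable M (\<lambda>\<omega>. A \<omega> ^ k)" using LA A0 by (simp add: Lk_def)
  have Ak: "A \<omega> ^ (k - 2) * A \<omega> * A \<omega> = A \<omega> ^ k" for \<omega>
  proof -
    have "k = Suc (Suc (k - 2))" using k by simp
    then show ?thesis by (metis mult.commute power_Suc)
  qed
  show ?thesis
  proof (rule Bochner_Integration.integrable_bound[OF iA])
    show "AE \<omega> in M. norm (\<bar>X \<omega>\<bar> ^ (k - 2) * X \<omega> * Y \<omega>) \<le> norm (A \<omega> ^ k)"
    proof (intro AE_I2)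
      fix \<omega>
      have "norm (\<bar>X \<omega>\<bar> ^ (k - 2) * X \<omega> * Y \<omega>) = \<bar>X \<omega>\<bar> ^ (k - 2) * \<bar>X \<omega>\<bar> * \<bar>Y \<omega>\<bar>"
        by (simp add: abs_mult)
      also have "\<dots> \<le> A \<omega> ^ (k - 2) * A \<omega> * A \<omega>"
        using A0[of \<omega>] by (intro mult_mono power_mono) (auto simp: A_def)
      finally show "norm (\<bar>X \<omega>\<bar> ^ (k - 2) * X \<omega> * Y \<omega>) \<le> norm (A \<omega> ^ k)" using Ak A0 by simp
    qed
  qed measurable
qed

end

locale qsetting = prob_space M for M :: "'a measure" +
  fixes \<xi> :: "nat \<Rightarrow> 'a \<Rightarrow> real" and k :: nat
  assumes meas: "\<And>i. \<xi> i \<in> borel_measurable M"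
    and indep: "indep_vars (\<lambda>_. borel) \<xi> UNIV"
    and ident: "\<And>i. distr M borel (\<xi> i) = distr M borel (\<xi> 1)"
    and cent: "(\<integral>\<omega>. \<xi> 1 \<omega> \<partial>M) = 0"
    and k2: "2 \<le> k"
    and int2k: "integrable M (\<lambda>\<omega>. \<xi> 1 \<omega> ^ (2 * k))"
begin

declare meas[measurable]

lemma transfer_int:
  fixes g :: "real \<Rightarrow> real"
  assumes [measurable]: "g \<in> borel_measurable borel"
  shows "(\<integral>\<omega>. g (\<xi> i \<omega>) \<partial>M) = (\<integral>\<omega>. g (\<xi> 1 \<omega>) \<partial>M)"
proof -
  have "(\<integral>\<omega>. g (\<xi> i \<omega>) \<partial>M) = integral\<^sup>L (distr M borel (\<xi> i)) g"
    using integral_distr[OF meas[of i] assms] by (rule sym)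
  also have "\<dots> = integral\<^sup>L (distr M borel (\<xi> 1)) g" by (simp only: ident[of i])
  also have "\<dots> = (\<integral>\<omega>. g (\<xi> 1 \<omega>) \<partial>M)" using integral_distr[OF meas[of 1] assms] .
  finally show ?thesis .
qed

lemma transfer_integrable:
  fixes g :: "real \<Rightarrow> real"
  assumes [measurable]: "g \<in> borel_measurable borel"
  shows "integrable M (\<lambda>\<omega>. g (\<xi> i \<omega>)) \<longleftrightarrow> integrable M (\<lambda>\<omega>. g (\<xi> 1 \<omega>))"
proof -
  have "integrable M (\<lambda>\<omega>. g (\<xi> i \<omega>)) \<longleftrightarrow> integrable (distr M borel (\<xi> i)) g"
    using integrable_distr_eq[OF meas[of i] assms] by (rule sym)
  also have "\<dots> \<longleftrightarrow> integrable (distr M borel (\<xi> 1)) g" by (simp only: ident[of i])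
  also have "\<dots> \<longleftrightarrow> integrable M (\<lambda>\<omega>. g (\<xi> 1 \<omega>))" using integrable_distr_eq[OF meas[of 1] assms] .
  finally show ?thesis .
qed

lemma int_abs_pow:
  assumes "j \<le> 2 * k"
  shows "integrable M (\<lambda>\<omega>. \<bar>\<xi> i \<omega>\<bar> ^ j)"
proof -
  have "integrable M (\<lambda>\<omega>. \<bar>\<xi> 1 \<omega>\<bar> ^ j)"
  proof (rule Bochner_Integration.integrable_bound[of _ "\<lambda>\<omega>. 1 + \<xi> 1 \<omega> ^ (2 * k)"])
    show "integrable M (\<lambda>\<omega>. 1 + \<xi> 1 \<omega> ^ (2 * k))" using int2k by simp
    show "AE \<omega> in M. norm (\<bar>\<xi> 1 \<omega>\<bar> ^ j) \<le> norm (1 + \<xi> 1 \<omega> ^ (2 * k))"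
    proof (intro AE_I2)
      fix \<omega>
      have e: "\<xi> 1 \<omega> ^ (2 * k) = \<bar>\<xi> 1 \<omega>\<bar> ^ (2 * k)" by (simp add: power_even_abs)
      have "\<bar>\<xi> 1 \<omega>\<bar> ^ j \<le> 1 + \<bar>\<xi> 1 \<omega>\<bar> ^ (2 * k)"
      proof (cases "\<bar>\<xi> 1 \<omega>\<bar> \<le> 1")
        case True
        then have "\<bar>\<xi> 1 \<omega>\<bar> ^ j \<le> 1" by (simp add: power_le_one)
        then show ?thesis by (smt (verit) zero_le_power abs_ge_zero)
      next
        case False
        then have "\<bar>\<xi> 1 \<omega>\<bar> ^ j \<le> \<bar>\<xi> 1 \<omega>\<bar> ^ (2 * k)" using assms by (intro power_increasing) auto
        then show ?thesis by simp
      qed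
      then show "norm (\<bar>\<xi> 1 \<omega>\<bar> ^ j) \<le> norm (1 + \<xi> 1 \<omega> ^ (2 * k))" unfolding e by simp
    qed
  qed measurable
  then show ?thesis using transfer_integrable[of "\<lambda>x. \<bar>x\<bar> ^ j" i] by simp
qed

lemma int_xi: "integrable M (\<xi> i)"
proof -
  have "integrable M (\<lambda>\<omega>. \<bar>\<xi> i \<omega>\<bar>)" using int_abs_pow[of 1 i] k2 by simp
  then show ?thesis using integrable_abs_iff[of "\<xi> i" M] by simp
qed

lemma mean_xi: "(\<integral>\<omega>. \<xi> i \<omega> \<partial>M) = 0"
  using transfer_int[of "\<lambda>x. x" i] cent by simp

lemma int_sq: "integrable M (\<lambda>\<omega>. (\<xi> i \<omega>)\<^sup>2)"
  using int_abs_pow[of 2 i] k2 by simp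

definition "sig2 = (\<integral>\<omega>. (\<xi> 1 \<omega>)\<^sup>2 \<partial>M)"
definition "mm = (\<integral>\<omega>. \<xi> 1 \<omega> ^ (2 * k) \<partial>M) powr (1 / real k)"

lemma sq_mean: "(\<integral>\<omega>. (\<xi> i \<omega>)\<^sup>2 \<partial>M) = sig2"
  using transfer_int[of "\<lambda>x. x\<^sup>2" i] by (simp add: sig2_def)

lemma Lk_xi: "Lk M k (\<xi> i)"
  using int_abs_pow[of k i] by (simp add: Lk_def)

lemma Lk_xi2: "Lk M k (\<lambda>\<omega>. (\<xi> i \<omega>)\<^sup>2)"
  using int_abs_pow[of "2 * k" i] by (simp add: Lk_def power_mult)

lemma mu_nonneg: "(\<integral>\<omega>. \<xi> 1 \<omega> ^ (2 * k) \<partial>M) \<ge> 0"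
  by (intro integral_nonneg_AE) (simp add: power_mult)

lemma mm_nonneg: "mm \<ge> 0" by (simp add: mm_def)

lemma Lnorm_xi2: "Lnorm M k (\<lambda>\<omega>. (\<xi> i \<omega>)\<^sup>2) = mm"
proof -
  have "(\<lambda>\<omega>. \<bar>(\<xi> i \<omega>)\<^sup>2\<bar> ^ k) = (\<lambda>\<omega>. \<xi> i \<omega> ^ (2 * k))" by (simp add: power_mult)
  then have "Lnorm M k (\<lambda>\<omega>. (\<xi> i \<omega>)\<^sup>2) = (\<integral>\<omega>. \<xi> i \<omega> ^ (2 * k) \<partial>M) powr (1 / real k)"
    by (simp add: Lnorm_def)
  also have "\<dots> = mm" using transfer_int[of "\<lambda>x. x ^ (2 * k)" i] by (simp add: mm_def)
  finally show ?thesis .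
qed

lemma sig2_le: "sig2 \<le> mm"
proof -
  have kk: "1 / real k + real (k - 1) / real k = 1" "1 / real k \<ge> 0" "real (k - 1) / real k \<ge> 0"
    using k2 by (auto simp: field_simps of_nat_diff)
  have H: "(\<integral>\<omega>. (\<xi> 1 \<omega> ^ (2 * k)) powr (1 / real k) * 1 powr (real (k - 1) / real k) \<partial>M)
      \<le> (\<integral>\<omega>. \<xi> 1 \<omega> ^ (2 * k) \<partial>M) powr (1 / real k) * (\<integral>\<omega>. 1 \<partial>M) powr (real (k - 1) / real k)"
    using holder(2)[of M "\<lambda>\<omega>. \<xi> 1 \<omega> ^ (2 * k)" "\<lambda>_. 1" "1 / real k" "real (k - 1) / real k"] int2k kk
    by (auto simp: power_mult)
  have e: "(\<xi> 1 \<omega> ^ (2 * k)) powr (1 / real k) = (\<xi> 1 \<omega>)\<^sup>2" for \<omega>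
    using pow_powr_inv[of "(\<xi> 1 \<omega>)\<^sup>2" k] k2 by (simp add: power_mult)
  show ?thesis using H unfolding e by (simp add: sig2_def mm_def prob_space)
qed

lemma sig2_nonneg: "sig2 \<ge> 0"
  by (simp add: sig2_def)

lemma Lnorm_xi_sq: "(Lnorm M k (\<xi> i))\<^sup>2 \<le> mm"
proof -
  have H: "(\<integral>\<omega>. (\<xi> i \<omega> ^ (2 * k)) powr (1 / 2) * 1 powr (1 / 2) \<partial>M)
      \<le> (\<integral>\<omega>. \<xi> i \<omega> ^ (2 * k) \<partial>M) powr (1 / 2) * (\<integral>\<omega>. 1 \<partial>M) powr (1 / 2)"
    using holder(2)[of M "\<lambda>\<omega>. \<xi> i \<omega> ^ (2 * k)" "\<lambda>_. 1" "1 / 2" "1 / 2"] int_abs_pow[of "2 * k" i]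
    by (auto simp: power_mult power_even_abs)
  have e: "(\<xi> i \<omega> ^ (2 * k)) powr (1 / 2) = \<bar>\<xi> i \<omega>\<bar> ^ k" for \<omega>
    using pow_powr_inv[of "\<bar>\<xi> i \<omega>\<bar> ^ k" 2] by (simp add: power_mult power_even_abs mult.commute power_abs)
  have mu_i: "(\<integral>\<omega>. \<xi> i \<omega> ^ (2 * k) \<partial>M) = (\<integral>\<omega>. \<xi> 1 \<omega> ^ (2 * k) \<partial>M)"
    using transfer_int[of "\<lambda>x. x ^ (2 * k)" i] by simp
  define \<mu> where "\<mu> = (\<integral>\<omega>. \<xi> 1 \<omega> ^ (2 * k) \<partial>M)"
  have \<mu>0: "\<mu> \<ge> 0" using mu_nonneg by (simp add: \<mu>_def)
  define E where "E = (\<integral>\<omega>. \<bar>\<xi> i \<omega>\<bar> ^ k \<partial>M)"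
  have E0: "E \<ge> 0" by (simp add: E_def)
  have E1: "E \<le> \<mu> powr (1 / 2)" using H unfolding e by (simp add: E_def \<mu>_def mu_i prob_space)
  have "(Lnorm M k (\<xi> i))\<^sup>2 = E powr (1 / real k) * E powr (1 / real k)"
    by (simp add: Lnorm_def E_def power2_eq_square)
  also have "\<dots> = E powr (2 / real k)" using E0 by (simp add: powr_add[symmetric])
  also have "\<dots> \<le> (\<mu> powr (1 / 2)) powr (2 / real k)" using E0 E1 by (intro powr_mono2) auto
  also have "\<dots> = mm" using \<mu>0 by (simp add: powr_powr mm_def \<mu>_def)
  finally show ?thesis .
qed

end


context qsetting
begin

definition pastm :: "nat set \<Rightarrow> ('a \<Rightarrow> real) \<Rightarrow> bool" where
  "pastm I G \<longleftrightarrow> (\<exists>F. F \<in> borel_measurable (PiM I (\<lambda>_. borel)) \<and> G = (\<lambda>\<omega>. F (\<lambda>j\<in>I. \<xi> j \<omega>)))"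

lemma restr_meas: "(\<lambda>\<omega>. \<lambda>j\<in>I. \<xi> j \<omega>) \<in> measurable M (PiM I (\<lambda>_. borel))"
  by (rule measurable_restrict) simp

lemma pastm_meas: "pastm I G \<Longrightarrow> G \<in> borel_measurable M"
  unfolding pastm_def using measurable_compose[OF restr_meas] by auto

lemma pastm_const: "pastm I (\<lambda>_. c)"
  unfolding pastm_def by (intro exI[of _ "\<lambda>_. c"]) auto

lemma pastm_xi: "j \<in> I \<Longrightarrow> pastm I (\<xi> j)"
  unfolding pastm_def by (intro exI[of _ "\<lambda>f. f j"]) (auto simp: fun_eq_iff)

lemma pastm_add: "pastm I G1 \<Longrightarrow> pastm I G2 \<Longrightarrow> pastm I (\<lambda>\<omega>. G1 \<omega> + G2 \<omega>)"
  unfolding pastm_def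
proof (elim exE conjE)
  fix F1 F2 assume F: "F1 \<in> borel_measurable (PiM I (\<lambda>_. borel))" "F2 \<in> borel_measurable (PiM I (\<lambda>_. borel))"
    and G: "G1 = (\<lambda>\<omega>. F1 (\<lambda>j\<in>I. \<xi> j \<omega>))" "G2 = (\<lambda>\<omega>. F2 (\<lambda>j\<in>I. \<xi> j \<omega>))"
  show "\<exists>F. F \<in> borel_measurable (PiM I (\<lambda>_. borel)) \<and> (\<lambda>\<omega>. G1 \<omega> + G2 \<omega>) = (\<lambda>\<omega>. F (\<lambda>j\<in>I. \<xi> j \<omega>))"
    using F G by (intro exI[of _ "\<lambda>f. F1 f + F2 f"]) auto
qed

lemma pastm_mult: "pastm I G1 \<Longrightarrow> pastm I G2 \<Longrightarrow> pastm I (\<lambda>\<omega>. G1 \<omega> * G2 \<omega>)"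
  unfolding pastm_def
proof (elim exE conjE)
  fix F1 F2 assume F: "F1 \<in> borel_measurable (PiM I (\<lambda>_. borel))" "F2 \<in> borel_measurable (PiM I (\<lambda>_. borel))"
    and G: "G1 = (\<lambda>\<omega>. F1 (\<lambda>j\<in>I. \<xi> j \<omega>))" "G2 = (\<lambda>\<omega>. F2 (\<lambda>j\<in>I. \<xi> j \<omega>))"
  show "\<exists>F. F \<in> borel_measurable (PiM I (\<lambda>_. borel)) \<and> (\<lambda>\<omega>. G1 \<omega> * G2 \<omega>) = (\<lambda>\<omega>. F (\<lambda>j\<in>I. \<xi> j \<omega>))"
    using F G by (intro exI[of _ "\<lambda>f. F1 f * F2 f"]) auto
qed

lemma pastm_comp:
  assumes g: "g \<in> borel_measurable borel" and G: "pastm I G"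
  shows "pastm I (\<lambda>\<omega>. g (G \<omega>))"
  using G unfolding pastm_def
proof (elim exE conjE)
  fix F assume F: "F \<in> borel_measurable (PiM I (\<lambda>_. borel))" and G: "G = (\<lambda>\<omega>. F (\<lambda>j\<in>I. \<xi> j \<omega>))"
  show "\<exists>F. F \<in> borel_measurable (PiM I (\<lambda>_. borel)) \<and> (\<lambda>\<omega>. g (G \<omega>)) = (\<lambda>\<omega>. F (\<lambda>j\<in>I. \<xi> j \<omega>))"
    using F G measurable_compose[OF F g] by (intro exI[of _ "\<lambda>f. g (F f)"]) (auto simp: comp_def)
qed

lemma pastm_sum:
  assumes "finite A" "\<And>x. x \<in> A \<Longrightarrow> pastm I (G x)"
  shows "pastm I (\<lambda>\<omega>. \<Sum>x\<in>A. G x \<omega>)"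
  using assms
proof (induction A rule: finite_induct)
  case empty then show ?case using pastm_const[of I 0] by simp
next
  case (insert a A)
  then show ?case using pastm_add[of I "G a" "\<lambda>\<omega>. \<Sum>x\<in>A. G x \<omega>"] by simp
qed

lemma pastm_mono:
  assumes IJ: "I \<subseteq> J" and G: "pastm I G" shows "pastm J G"
  using G unfolding pastm_def
proof (elim exE conjE)
  fix F assume F: "F \<in> borel_measurable (PiM I (\<lambda>_. borel))" and G: "G = (\<lambda>\<omega>. F (\<lambda>j\<in>I. \<xi> j \<omega>))"
  have m: "(\<lambda>f. F (restrict f I)) \<in> borel_measurable (PiM J (\<lambda>_. borel))"
    using measurable_compose[OF measurable_restrict_subset[OF IJ] F] by (simp add: comp_def)
  have e: "restrict (\<lambda>j\<in>J. \<xi> j \<omega>) I = (\<lambda>j\<in>I. \<xi> j \<omega>)" for \<omega>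
    using IJ by (auto simp: fun_eq_iff restrict_def)
  show "\<exists>F. F \<in> borel_measurable (PiM J (\<lambda>_. borel)) \<and> G = (\<lambda>\<omega>. F (\<lambda>j\<in>J. \<xi> j \<omega>))"
    using m G e by (intro exI[of _ "\<lambda>f. F (restrict f I)"]) auto
qed

lemma indep_past:
  assumes i: "i \<notin> I" and G: "pastm I G" and h: "h \<in> borel_measurable borel"
  shows "indep_var borel (\<lambda>\<omega>. h (\<xi> i \<omega>)) borel G"
proof -
  obtain F where F: "F \<in> borel_measurable (PiM I (\<lambda>_. borel))" and GF: "G = (\<lambda>\<omega>. F (\<lambda>j\<in>I. \<xi> j \<omega>))"
    using G unfolding pastm_def by auto
  have hm: "(\<lambda>f. h (f i)) \<in> borel_measurable (PiM {i} (\<lambda>_. borel))"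
    using measurable_compose[OF measurable_component_singleton[of i "{i}" "\<lambda>_. borel"] h] by (simp add: comp_def)
  have "indep_var borel ((\<lambda>f. h (f i)) \<circ> (\<lambda>\<omega>. restrict (\<lambda>j. \<xi> j \<omega>) {i}))
                  borel (F \<circ> (\<lambda>\<omega>. restrict (\<lambda>j. \<xi> j \<omega>) I))"
    using i by (intro indep_var_compose[OF indep_var_restrict[OF indep] hm F]) auto
  also have "((\<lambda>f. h (f i)) \<circ> (\<lambda>\<omega>. restrict (\<lambda>j. \<xi> j \<omega>) {i})) = (\<lambda>\<omega>. h (\<xi> i \<omega>))"
    by (auto simp: fun_eq_iff)
  also have "F \<circ> (\<lambda>\<omega>. restrict (\<lambda>j. \<xi> j \<omega>) I) = G"
    by (simp add: GF comp_def)
  finally show ?thesis .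
qed

lemma indep_prod:
  assumes i: "i \<notin> I" and G: "pastm I G" and h: "h \<in> borel_measurable borel"
    and iG: "integrable M G" and ih: "integrable M (\<lambda>\<omega>. h (\<xi> i \<omega>))"
  shows "integrable M (\<lambda>\<omega>. h (\<xi> i \<omega>) * G \<omega>)"
    and "(\<integral>\<omega>. h (\<xi> i \<omega>) * G \<omega> \<partial>M) = (\<integral>\<omega>. h (\<xi> i \<omega>) \<partial>M) * (\<integral>\<omega>. G \<omega> \<partial>M)"
  using indep_var_integrable[OF indep_past[OF i G h] ih iG]
    indep_var_lebesgue_integral[OF indep_past[OF i G h] ih iG] by auto

end


context qsetting
begin

definition Lf :: "(nat \<Rightarrow> nat \<Rightarrow> real) \<Rightarrow> nat \<Rightarrow> 'a \<Rightarrow> real" where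
  "Lf a i \<omega> = (\<Sum>j\<in>{1..<i}. a i j * \<xi> j \<omega>)"

definition Dq :: "(nat \<Rightarrow> nat \<Rightarrow> real) \<Rightarrow> nat \<Rightarrow> 'a \<Rightarrow> real" where
  "Dq a i \<omega> = a i i * ((\<xi> i \<omega>)\<^sup>2 - sig2) + 2 * \<xi> i \<omega> * Lf a i \<omega>"

lemma pastm_cxi: "j \<in> I \<Longrightarrow> pastm I (\<lambda>\<omega>. c * \<xi> j \<omega>)"
  by (intro pastm_mult pastm_const pastm_xi)

lemma pastm_Lf: "pastm {1..<i} (Lf a i)"
proof -
  have "pastm {1..<i} (\<lambda>\<omega>. \<Sum>j\<in>{1..<i}. a i j * \<xi> j \<omega>)"
    by (intro pastm_sum pastm_cxi) auto
  then show ?thesis by (simp add: Lf_def[abs_def])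
qed

lemma Lk_Lf: "Lk M k (Lf a i)"
proof -
  have "Lk M k (\<lambda>\<omega>. \<Sum>j\<in>{1..<i}. a i j * \<xi> j \<omega>)"
    by (intro Lk_sum Lk_scale Lk_xi) auto
  then show ?thesis by (simp add: Lf_def[abs_def])
qed

lemma G_pastm: "pastm I S \<Longrightarrow> pastm I (\<lambda>\<omega>. \<bar>S \<omega>\<bar> ^ (k - 2) * S \<omega>)"
  using pastm_comp[of "\<lambda>x. \<bar>x\<bar> ^ (k - 2) * x" I S] by simp

lemma G_int: "Lk M k S \<Longrightarrow> integrable M (\<lambda>\<omega>. \<bar>S \<omega>\<bar> ^ (k - 2) * S \<omega>)"
  using mixed_int[OF k2, of S "\<lambda>_. 1"] Lk_const[of k 1] by simp

lemma Lf_bound: "(Lnorm M k (Lf a i))\<^sup>2 \<le> 6 * real k * mm * (\<Sum>j\<in>{1..<i}. (a i j)\<^sup>2)"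
proof -
  define D where "D j \<omega> = a i j * \<xi> j \<omega>" for j \<omega>
  have set: "{1..i - 1} = {1..<i}" by auto
  have LD: "Lk M k (D j)" for j unfolding D_def by (intro Lk_scale Lk_xi)
  have orth: "(\<integral>\<omega>. \<bar>\<Sum>r\<in>{1..<l}. D r \<omega>\<bar> ^ (k - 2) * (\<Sum>r\<in>{1..<l}. D r \<omega>) * D l \<omega> \<partial>M) = 0" for l
  proof -
    define G where "G \<omega> = \<bar>\<Sum>r\<in>{1..<l}. D r \<omega>\<bar> ^ (k - 2) * (\<Sum>r\<in>{1..<l}. D r \<omega>)" for \<omega>
    have pS: "pastm {1..<l} (\<lambda>\<omega>. \<Sum>r\<in>{1..<l}. D r \<omega>)"
      unfolding D_def by (intro pastm_sum pastm_cxi) auto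
    have pG: "pastm {1..<l} G" unfolding G_def by (rule G_pastm[OF pS])
    have iG: "integrable M G" unfolding G_def by (intro G_int Lk_sum LD) auto
    have ih: "integrable M (\<lambda>\<omega>. a i l * \<xi> l \<omega>)" using int_xi[of l] by simp
    have "(\<integral>\<omega>. \<bar>\<Sum>r\<in>{1..<l}. D r \<omega>\<bar> ^ (k - 2) * (\<Sum>r\<in>{1..<l}. D r \<omega>) * D l \<omega> \<partial>M)
        = (\<integral>\<omega>. (a i l * \<xi> l \<omega>) * G \<omega> \<partial>M)"
      by (simp add: G_def D_def ac_simps)
    also have "\<dots> = (\<integral>\<omega>. a i l * \<xi> l \<omega> \<partial>M) * (\<integral>\<omega>. G \<omega> \<partial>M)"
      by (rule indep_prod(2)[OF _ pG _ iG ih]) auto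
    also have "\<dots> = 0" using mean_xi[of l] by simp
    finally show ?thesis .
  qed
  have m: "(Lnorm M k (\<lambda>\<omega>. \<Sum>l\<in>{1..i - 1}. D l \<omega>))\<^sup>2 \<le> 6 * real k * (\<Sum>l\<in>{1..i - 1}. (Lnorm M k (D l))\<^sup>2)"
    using mart_ineq[OF k2, of "i - 1" D] LD orth by auto
  have "(Lnorm M k (D l))\<^sup>2 \<le> (a i l)\<^sup>2 * mm" for l
  proof -
    have "(Lnorm M k (D l))\<^sup>2 = (a i l)\<^sup>2 * (Lnorm M k (\<xi> l))\<^sup>2"
      unfolding D_def using k2 by (simp add: Lnorm_scale power_mult_distrib)
    also have "\<dots> \<le> (a i l)\<^sup>2 * mm" using Lnorm_xi_sq[of l] by (intro mult_left_mono) auto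
    finally show ?thesis .
  qed
  then have "(\<Sum>l\<in>{1..i - 1}. (Lnorm M k (D l))\<^sup>2) \<le> (\<Sum>l\<in>{1..i - 1}. (a i l)\<^sup>2 * mm)"
    by (intro sum_mono)
  also have "\<dots> = mm * (\<Sum>j\<in>{1..<i}. (a i j)\<^sup>2)" unfolding set by (simp add: sum_distrib_left mult.commute)
  finally have s: "(\<Sum>l\<in>{1..i - 1}. (Lnorm M k (D l))\<^sup>2) \<le> mm * (\<Sum>j\<in>{1..<i}. (a i j)\<^sup>2)" .
  have "Lf a i = (\<lambda>\<omega>. \<Sum>l\<in>{1..i - 1}. D l \<omega>)" unfolding set by (simp add: fun_eq_iff Lf_def D_def)
  then have "(Lnorm M k (Lf a i))\<^sup>2 \<le> 6 * real k * (\<Sum>l\<in>{1..i - 1}. (Lnorm M k (D l))\<^sup>2)" using m by simp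
  also have "\<dots> \<le> 6 * real k * (mm * (\<Sum>j\<in>{1..<i}. (a i j)\<^sup>2))" using s by (intro mult_left_mono) auto
  finally show ?thesis by (simp add: ac_simps)
qed

lemma xiLf:
  shows "Lk M k (\<lambda>\<omega>. \<xi> i \<omega> * Lf a i \<omega>)"
    and "Lnorm M k (\<lambda>\<omega>. \<xi> i \<omega> * Lf a i \<omega>) = Lnorm M k (\<xi> i) * Lnorm M k (Lf a i)"
proof -
  have pL: "pastm {1..<i} (\<lambda>\<omega>. \<bar>Lf a i \<omega>\<bar> ^ k)"
    using pastm_comp[of "\<lambda>x. \<bar>x\<bar> ^ k" "{1..<i}" "Lf a i"] pastm_Lf by simp
  have iL: "integrable M (\<lambda>\<omega>. \<bar>Lf a i \<omega>\<bar> ^ k)" using Lk_Lf by (simp add: Lk_def)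
  have ix: "integrable M (\<lambda>\<omega>. \<bar>\<xi> i \<omega>\<bar> ^ k)" using Lk_xi by (simp add: Lk_def)
  have e: "(\<lambda>\<omega>. \<bar>\<xi> i \<omega> * Lf a i \<omega>\<bar> ^ k) = (\<lambda>\<omega>. \<bar>\<xi> i \<omega>\<bar> ^ k * \<bar>Lf a i \<omega>\<bar> ^ k)"
    by (simp add: abs_mult power_mult_distrib)
  have I1: "integrable M (\<lambda>\<omega>. \<bar>\<xi> i \<omega>\<bar> ^ k * \<bar>Lf a i \<omega>\<bar> ^ k)"
    by (rule indep_prod(1)[OF _ pL _ iL ix]) auto
  have I2: "(\<integral>\<omega>. \<bar>\<xi> i \<omega>\<bar> ^ k * \<bar>Lf a i \<omega>\<bar> ^ k \<partial>M) = (\<integral>\<omega>. \<bar>\<xi> i \<omega>\<bar> ^ k \<partial>M) * (\<integral>\<omega>. \<bar>Lf a i \<omega>\<bar> ^ k \<partial>M)"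
    by (rule indep_prod(2)[OF _ pL _ iL ix]) auto
  have [measurable]: "Lf a i \<in> borel_measurable M" using Lk_Lf by (simp add: Lk_def)
  show "Lk M k (\<lambda>\<omega>. \<xi> i \<omega> * Lf a i \<omega>)" unfolding Lk_def e using I1 by simp
  show "Lnorm M k (\<lambda>\<omega>. \<xi> i \<omega> * Lf a i \<omega>) = Lnorm M k (\<xi> i) * Lnorm M k (Lf a i)"
    unfolding Lnorm_def e I2 by (simp add: powr_mult)
qed

lemma Lk_Dq: "Lk M k (Dq a i)"
proof -
  have "Lk M k (\<lambda>\<omega>. a i i * ((\<xi> i \<omega>)\<^sup>2 + (- sig2)) + 2 * (\<xi> i \<omega> * Lf a i \<omega>))"
    by (intro Lk_add Lk_scale Lk_xi2 Lk_const xiLf(1))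
  then show ?thesis by (simp add: Dq_def[abs_def] ac_simps)
qed

lemma Dq_bound: "(Lnorm M k (Dq a i))\<^sup>2 \<le> 48 * real k * mm\<^sup>2 * ((a i i)\<^sup>2 + (\<Sum>j\<in>{1..<i}. (a i j)\<^sup>2))"
proof -
  have k0: "k > 0" using k2 by simp
  have e: "Dq a i = (\<lambda>\<omega>. a i i * ((\<xi> i \<omega>)\<^sup>2 + (- sig2)) + 2 * (\<xi> i \<omega> * Lf a i \<omega>))"
    by (simp add: Dq_def[abs_def] ac_simps)
  have L1: "Lk M k (\<lambda>\<omega>. a i i * ((\<xi> i \<omega>)\<^sup>2 + (- sig2)))" by (intro Lk_scale Lk_add Lk_xi2 Lk_const)
  have L2: "Lk M k (\<lambda>\<omega>. 2 * (\<xi> i \<omega> * Lf a i \<omega>))" by (intro Lk_scale xiLf(1))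
  have n1: "Lnorm M k (\<lambda>\<omega>. (\<xi> i \<omega>)\<^sup>2 + (- sig2)) \<le> 2 * mm"
  proof -
    have "Lnorm M k (\<lambda>\<omega>. (\<xi> i \<omega>)\<^sup>2 + (- sig2)) \<le> Lnorm M k (\<lambda>\<omega>. (\<xi> i \<omega>)\<^sup>2) + Lnorm M k (\<lambda>_. - sig2)"
      by (rule Lnorm_add[OF k2 Lk_xi2 Lk_const])
    also have "\<dots> = mm + sig2" using Lnorm_xi2 Lnorm_const[OF k0] sig2_nonneg by simp
    finally show ?thesis using sig2_le by simp
  qed
  define X where "X = Lnorm M k (\<xi> i)"
  define Y where "Y = Lnorm M k (Lf a i)"
  have X0: "X \<ge> 0" and Y0: "Y \<ge> 0" by (simp_all add: X_def Y_def Lnorm_nonneg)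
  have "Lnorm M k (Dq a i) \<le> Lnorm M k (\<lambda>\<omega>. a i i * ((\<xi> i \<omega>)\<^sup>2 + (- sig2))) + Lnorm M k (\<lambda>\<omega>. 2 * (\<xi> i \<omega> * Lf a i \<omega>))"
    unfolding e by (rule Lnorm_add[OF k2 L1 L2])
  also have "\<dots> = \<bar>a i i\<bar> * Lnorm M k (\<lambda>\<omega>. (\<xi> i \<omega>)\<^sup>2 + (- sig2)) + 2 * (X * Y)"
    using xiLf(2) by (simp add: Lnorm_scale[OF k0] X_def Y_def)
  also have "\<dots> \<le> \<bar>a i i\<bar> * (2 * mm) + 2 * (X * Y)"
    using n1 by (intro add_right_mono mult_left_mono) auto
  finally have b: "Lnorm M k (Dq a i) \<le> 2 * (\<bar>a i i\<bar> * mm) + 2 * (X * Y)" by simp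
  have "(Lnorm M k (Dq a i))\<^sup>2 \<le> (2 * (\<bar>a i i\<bar> * mm) + 2 * (X * Y))\<^sup>2"
    using b by (intro power_mono) (auto simp: Lnorm_nonneg)
  also have "\<dots> \<le> 8 * ((a i i)\<^sup>2 * mm\<^sup>2) + 8 * (X\<^sup>2 * Y\<^sup>2)"
  proof -
    have "(2 * (\<bar>a i i\<bar> * mm) + 2 * (X * Y))\<^sup>2 \<le> 2 * (2 * (\<bar>a i i\<bar> * mm))\<^sup>2 + 2 * (2 * (X * Y))\<^sup>2"
      using sum_squares_bound[of "2 * (\<bar>a i i\<bar> * mm)" "2 * (X * Y)"] by (simp add: power2_eq_square algebra_simps)
    then show ?thesis by (simp add: power_mult_distrib)
  qed
  also have "X\<^sup>2 * Y\<^sup>2 \<le> mm * (6 * real k * mm * (\<Sum>j\<in>{1..<i}. (a i j)\<^sup>2))"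
    using Lnorm_xi_sq[of i] Lf_bound[of a i] unfolding X_def[symmetric] Y_def[symmetric]
    by (intro mult_mono) (auto intro!: mult_nonneg_nonneg sum_nonneg mm_nonneg)
  also have "8 * ((a i i)\<^sup>2 * mm\<^sup>2) + 8 * (mm * (6 * real k * mm * (\<Sum>j\<in>{1..<i}. (a i j)\<^sup>2)))
      \<le> 48 * real k * mm\<^sup>2 * ((a i i)\<^sup>2 + (\<Sum>j\<in>{1..<i}. (a i j)\<^sup>2))"
  proof -
    have "8 * ((a i i)\<^sup>2 * mm\<^sup>2) \<le> 48 * real k * ((a i i)\<^sup>2 * mm\<^sup>2)"
      using k2 by (intro mult_right_mono) auto
    then show ?thesis by (simp add: power2_eq_square algebra_simps)
  qed
  finally show ?thesis by simp
qed

end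


lemma sym_sum:
  fixes b :: "nat \<Rightarrow> nat \<Rightarrow> real"
  shows "(\<Sum>i\<in>{1..n}. \<Sum>j\<in>{1..n}. b i j) = (\<Sum>i\<in>{1..n}. b i i + (\<Sum>j\<in>{1..<i}. b i j + b j i))"
proof (induction n)
  case 0 then show ?case by simp
next
  case (Suc n)
  have "(\<Sum>i\<in>{1..Suc n}. \<Sum>j\<in>{1..Suc n}. b i j)
      = (\<Sum>i\<in>{1..n}. \<Sum>j\<in>{1..n}. b i j) + (\<Sum>i\<in>{1..n}. b i (Suc n)) + ((\<Sum>j\<in>{1..n}. b (Suc n) j) + b (Suc n) (Suc n))"
    by (simp add: sum.cl_ivl_Suc sum.distrib)
  also have "\<dots> = (\<Sum>i\<in>{1..n}. b i i + (\<Sum>j\<in>{1..<i}. b i j + b j i))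
      + (b (Suc n) (Suc n) + (\<Sum>j\<in>{1..<Suc n}. b (Suc n) j + b j (Suc n)))"
    using Suc.IH by (simp add: atLeastLessThanSuc_atLeastAtMost sum.distrib)
  also have "\<dots> = (\<Sum>i\<in>{1..Suc n}. b i i + (\<Sum>j\<in>{1..<i}. b i j + b j i))"
    by (simp add: sum.cl_ivl_Suc)
  finally show ?case .
qed

context qsetting
begin

lemma pastm_Dq: "1 \<le> r \<Longrightarrow> pastm {1..r} (Dq a r)"
proof -
  assume r: "1 \<le> r"
  have p1: "pastm {1..r} (\<lambda>\<omega>. a r r * ((\<xi> r \<omega>)\<^sup>2 - sig2))"
    using pastm_comp[of "\<lambda>x. a r r * (x\<^sup>2 - sig2)" "{1..r}" "\<xi> r"] pastm_xi[of r "{1..r}"] r by simp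
  have q1: "pastm {1..r} (\<lambda>\<omega>. 2 * \<xi> r \<omega>)" using r by (intro pastm_mult pastm_const pastm_xi) auto
  have q2: "pastm {1..r} (Lf a r)" by (rule pastm_mono[OF _ pastm_Lf]) auto
  have p2: "pastm {1..r} (\<lambda>\<omega>. 2 * \<xi> r \<omega> * Lf a r \<omega>)" using pastm_mult[OF q1 q2] by simp
  show ?thesis using pastm_add[OF p1 p2] by (simp add: Dq_def[abs_def])
qed

lemma outer_orth:
  "(\<integral>\<omega>. \<bar>\<Sum>r\<in>{1..<l}. Dq a r \<omega>\<bar> ^ (k - 2) * (\<Sum>r\<in>{1..<l}. Dq a r \<omega>) * Dq a l \<omega> \<partial>M) = 0"
proof -
  define S where "S \<omega> = (\<Sum>r\<in>{1..<l}. Dq a r \<omega>)" for \<omega>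
  define G where "G \<omega> = \<bar>S \<omega>\<bar> ^ (k - 2) * S \<omega>" for \<omega>
  have pS: "pastm {1..<l} S" unfolding S_def
    by (intro pastm_sum) (auto intro: pastm_mono[OF _ pastm_Dq])
  have LS: "Lk M k S" unfolding S_def by (intro Lk_sum Lk_Dq) auto
  have pG: "pastm {1..<l} G" unfolding G_def by (rule G_pastm[OF pS])
  have iG: "integrable M G" unfolding G_def by (rule G_int[OF LS])
  have pGL: "pastm {1..<l} (\<lambda>\<omega>. G \<omega> * Lf a l \<omega>)" by (intro pastm_mult pG pastm_Lf)
  have iGL: "integrable M (\<lambda>\<omega>. G \<omega> * Lf a l \<omega>)"
    using mixed_int[OF k2 LS Lk_Lf[of a l]] by (simp add: G_def)
  have ih1: "integrable M (\<lambda>\<omega>. (\<xi> l \<omega>)\<^sup>2 - sig2)" using int_sq[of l] by simp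
  have ih2: "integrable M (\<lambda>\<omega>. \<xi> l \<omega>)" using int_xi[of l] by simp
  have P1: "integrable M (\<lambda>\<omega>. ((\<xi> l \<omega>)\<^sup>2 - sig2) * G \<omega>)"
    "(\<integral>\<omega>. ((\<xi> l \<omega>)\<^sup>2 - sig2) * G \<omega> \<partial>M) = (\<integral>\<omega>. (\<xi> l \<omega>)\<^sup>2 - sig2 \<partial>M) * (\<integral>\<omega>. G \<omega> \<partial>M)"
    using indep_prod[of l "{1..<l}" G "\<lambda>x. x\<^sup>2 - sig2"] pG iG ih1 by auto
  have P2: "integrable M (\<lambda>\<omega>. \<xi> l \<omega> * (G \<omega> * Lf a l \<omega>))"
    "(\<integral>\<omega>. \<xi> l \<omega> * (G \<omega> * Lf a l \<omega>) \<partial>M) = (\<integral>\<omega>. \<xi> l \<omega> \<partial>M) * (\<integral>\<omega>. G \<omega> * Lf a l \<omega> \<partial>M)"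
    using indep_prod[of l "{1..<l}" "\<lambda>\<omega>. G \<omega> * Lf a l \<omega>" "\<lambda>x. x"] pGL iGL ih2 by auto
  have z1: "(\<integral>\<omega>. (\<xi> l \<omega>)\<^sup>2 - sig2 \<partial>M) = 0"
    using int_sq[of l] sq_mean[of l] prob_space by simp
  have e1: "(\<lambda>\<omega>. \<bar>\<Sum>r\<in>{1..<l}. Dq a r \<omega>\<bar> ^ (k - 2) * (\<Sum>r\<in>{1..<l}. Dq a r \<omega>) * Dq a l \<omega>) = (\<lambda>\<omega>. G \<omega> * Dq a l \<omega>)"
    by (simp add: G_def S_def)
  have e2: "(\<lambda>\<omega>. G \<omega> * Dq a l \<omega>) = (\<lambda>\<omega>. a l l * (((\<xi> l \<omega>)\<^sup>2 - sig2) * G \<omega>) + 2 * (\<xi> l \<omega> * (G \<omega> * Lf a l \<omega>)))"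
    by (rule ext) (simp add: Dq_def algebra_simps)
  have "(\<integral>\<omega>. \<bar>\<Sum>r\<in>{1..<l}. Dq a r \<omega>\<bar> ^ (k - 2) * (\<Sum>r\<in>{1..<l}. Dq a r \<omega>) * Dq a l \<omega> \<partial>M)
      = (\<integral>\<omega>. a l l * (((\<xi> l \<omega>)\<^sup>2 - sig2) * G \<omega>) + 2 * (\<xi> l \<omega> * (G \<omega> * Lf a l \<omega>)) \<partial>M)"
    unfolding e1 e2 ..
  also have "\<dots> = a l l * (\<integral>\<omega>. ((\<xi> l \<omega>)\<^sup>2 - sig2) * G \<omega> \<partial>M) + 2 * (\<integral>\<omega>. \<xi> l \<omega> * (G \<omega> * Lf a l \<omega>) \<partial>M)"
    using P1(1) P2(1) by simp
  also have "\<dots> = 0" using P1(2) P2(2) z1 mean_xi[of l] by simp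
  finally show ?thesis .
qed

lemma E_prod: "(\<integral>\<omega>. \<xi> i \<omega> * \<xi> j \<omega> \<partial>M) = (if i = j then sig2 else 0)"
proof (cases "i = j")
  case True then show ?thesis using sq_mean[of i] by (simp add: power2_eq_square)
next
  case False
  have "(\<integral>\<omega>. \<xi> i \<omega> * \<xi> j \<omega> \<partial>M) = (\<integral>\<omega>. \<xi> i \<omega> \<partial>M) * (\<integral>\<omega>. \<xi> j \<omega> \<partial>M)"
    using indep_prod(2)[of i "{j}" "\<xi> j" "\<lambda>x. x"] pastm_xi[of j "{j}"] int_xi False by auto
  then show ?thesis using mean_xi False by simp
qed

lemma quad_id:
  assumes sym: "\<And>i j. a i j = a j i"
  shows "(\<lambda>\<omega>. \<Sum>i\<in>{1..n}. \<Sum>j\<in>{1..n}. a i j * (\<xi> i \<omega> * \<xi> j \<omega> - (\<integral>\<omega>'. \<xi> i \<omega>' * \<xi> j \<omega>' \<partial>M)))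
       = (\<lambda>\<omega>. \<Sum>i\<in>{1..n}. Dq a i \<omega>)"
proof
  fix \<omega>
  define b where "b i j = a i j * (\<xi> i \<omega> * \<xi> j \<omega> - (if i = j then sig2 else 0))" for i j
  have "(\<Sum>i\<in>{1..n}. \<Sum>j\<in>{1..n}. a i j * (\<xi> i \<omega> * \<xi> j \<omega> - (\<integral>\<omega>'. \<xi> i \<omega>' * \<xi> j \<omega>' \<partial>M)))
      = (\<Sum>i\<in>{1..n}. \<Sum>j\<in>{1..n}. b i j)" by (simp add: b_def E_prod)
  also have "\<dots> = (\<Sum>i\<in>{1..n}. b i i + (\<Sum>j\<in>{1..<i}. b i j + b j i))" by (rule sym_sum)
  also have "\<dots> = (\<Sum>i\<in>{1..n}. Dq a i \<omega>)"
  proof (intro sum.cong refl)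
    fix i
    have "(\<Sum>j\<in>{1..<i}. b i j + b j i) = (\<Sum>j\<in>{1..<i}. 2 * \<xi> i \<omega> * (a i j * \<xi> j \<omega>))"
    proof (intro sum.cong refl)
      fix j assume j: "j \<in> {1..<i}"
      then have "j \<noteq> i" by auto
      then show "b i j + b j i = 2 * \<xi> i \<omega> * (a i j * \<xi> j \<omega>)"
        using sym[of j i] by (simp add: b_def algebra_simps)
    qed
    also have "\<dots> = 2 * \<xi> i \<omega> * Lf a i \<omega>" by (simp add: Lf_def sum_distrib_left)
    finally show "b i i + (\<Sum>j\<in>{1..<i}. b i j + b j i) = Dq a i \<omega>"
      by (simp add: b_def Dq_def power2_eq_square)
  qed
  finally show "(\<Sum>i\<in>{1..n}. \<Sum>j\<in>{1..n}. a i j * (\<xi> i \<omega> * \<xi> j \<omega> - (\<integral>\<omega>'. \<xi> i \<omega>' * \<xi> j \<omega>' \<partial>M)))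
      = (\<Sum>i\<in>{1..n}. Dq a i \<omega>)" .
qed

lemma quad_bound:
  "(Lnorm M k (\<lambda>\<omega>. \<Sum>i\<in>{1..n}. Dq a i \<omega>))\<^sup>2
     \<le> 288 * (real k)\<^sup>2 * mm\<^sup>2 * (\<Sum>i\<in>{1..n}. \<Sum>j\<in>{1..n}. (a i j)\<^sup>2)"
proof -
  have m: "(Lnorm M k (\<lambda>\<omega>. \<Sum>i\<in>{1..n}. Dq a i \<omega>))\<^sup>2 \<le> 6 * real k * (\<Sum>i\<in>{1..n}. (Lnorm M k (Dq a i))\<^sup>2)"
    using mart_ineq[OF k2, of n "Dq a"] Lk_Dq outer_orth by auto
  have "(Lnorm M k (Dq a i))\<^sup>2 \<le> 48 * real k * mm\<^sup>2 * (\<Sum>j\<in>{1..n}. (a i j)\<^sup>2)" if i: "i \<in> {1..n}" for i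
  proof -
    have "(a i i)\<^sup>2 + (\<Sum>j\<in>{1..<i}. (a i j)\<^sup>2) = (\<Sum>j\<in>insert i {1..<i}. (a i j)\<^sup>2)" by simp
    also have "\<dots> \<le> (\<Sum>j\<in>{1..n}. (a i j)\<^sup>2)" using i by (intro sum_mono2) auto
    finally have "(a i i)\<^sup>2 + (\<Sum>j\<in>{1..<i}. (a i j)\<^sup>2) \<le> (\<Sum>j\<in>{1..n}. (a i j)\<^sup>2)" .
    then have "48 * real k * mm\<^sup>2 * ((a i i)\<^sup>2 + (\<Sum>j\<in>{1..<i}. (a i j)\<^sup>2)) \<le> 48 * real k * mm\<^sup>2 * (\<Sum>j\<in>{1..n}. (a i j)\<^sup>2)"
      by (intro mult_left_mono) auto
    then show ?thesis using Dq_bound[of a i] by linarith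
  qed
  then have "(\<Sum>i\<in>{1..n}. (Lnorm M k (Dq a i))\<^sup>2) \<le> (\<Sum>i\<in>{1..n}. 48 * real k * mm\<^sup>2 * (\<Sum>j\<in>{1..n}. (a i j)\<^sup>2))"
    by (intro sum_mono) auto
  also have "\<dots> = 48 * real k * mm\<^sup>2 * (\<Sum>i\<in>{1..n}. \<Sum>j\<in>{1..n}. (a i j)\<^sup>2)" by (simp add: sum_distrib_left)
  finally have "6 * real k * (\<Sum>i\<in>{1..n}. (Lnorm M k (Dq a i))\<^sup>2) \<le> 6 * real k * (48 * real k * mm\<^sup>2 * (\<Sum>i\<in>{1..n}. \<Sum>j\<in>{1..n}. (a i j)\<^sup>2))"
    by (intro mult_left_mono) auto
  with m show ?thesis by (simp add: power2_eq_square algebra_simps)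
qed

end


lemma sin_2pi_int_add: "sin (x + 2 * pi * of_int z) = sin x"
  by (simp add: sin_add)

lemma cos_2pi_int_add: "cos (x + 2 * pi * of_int z) = cos x"
  by (simp add: cos_add)

lemma sin_half_nz:
  fixes z :: int assumes "0 < \<bar>z\<bar>" "\<bar>z\<bar> < int n"
  shows "sin (pi * of_int z / real n) \<noteq> 0"
proof
  assume "sin (pi * of_int z / real n) = 0"
  then obtain m :: int where m: "pi * of_int z / real n = of_int m * pi" by (auto simp: sin_zero_iff_int2)
  have n0: "real n > 0" using assms by simp
  then have "of_int z = of_int m * real n" using m by (simp add: field_simps)
  then have "z = m * int n" by (metis of_int_eq_iff of_int_mult of_int_of_nat_eq)
  then have za: "\<bar>z\<bar> = \<bar>m\<bar> * int n" by (simp add: abs_mult)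
  show False
  proof (cases "m = 0")
    case True then show False using za assms by simp
  next
    case False
    then have "1 \<le> \<bar>m\<bar>" by simp
    then have "int n \<le> \<bar>m\<bar> * int n" using mult_right_mono[of 1 "\<bar>m\<bar>" "int n"] by simp
    then show False using za assms by linarith
  qed
qed

lemma cos_sum_zero:
  fixes z :: int assumes z: "0 < \<bar>z\<bar>" "\<bar>z\<bar> < int n"
  shows "(\<Sum>i=1..n. cos (2 * pi * of_int z * real i / real n)) = 0"
proof -
  define a where "a = 2 * pi * of_int z / real n"
  define f where "f i = sin ((real i - 1 / 2) * a)" for i :: nat
  have n0: "real n > 0" using z by simp
  have s: "sin (a / 2) \<noteq> 0" using sin_half_nz[OF z] by (simp add: a_def)
  have t: "2 * sin (a / 2) * cos (2 * pi * of_int z * real i / real n) = f (Suc i) - f i" for i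
  proof -
    have "f (Suc i) = sin (real i * a + a / 2)" by (simp add: f_def algebra_simps)
    moreover have "f i = sin (real i * a - a / 2)" by (simp add: f_def algebra_simps)
    moreover have "2 * pi * of_int z * real i / real n = real i * a" by (simp add: a_def)
    ultimately show ?thesis by (simp add: sin_add sin_diff)
  qed
  have "2 * sin (a / 2) * (\<Sum>i=1..n. cos (2 * pi * of_int z * real i / real n)) = (\<Sum>i=1..n. f (Suc i) - f i)"
    by (simp add: sum_distrib_left t mult.assoc[symmetric])
  also have "\<dots> = f (Suc n) - f 1" using z by (intro sum_Suc_diff) auto
  also have "f (Suc n) = sin (a / 2 + 2 * pi * of_int z)"
  proof -
    have na: "real n * a = 2 * pi * of_int z" using n0 by (simp add: a_def)
    have "(real (Suc n) - 1 / 2) * a = a / 2 + real n * a" by (simp add: algebra_simps)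
    then show ?thesis by (simp add: f_def na)
  qed
  also have "\<dots> = f 1" by (simp only: sin_2pi_int_add) (simp add: f_def)
  finally show ?thesis using s by simp
qed

lemma sin_sum_zero:
  fixes z :: int assumes z: "0 < \<bar>z\<bar>" "\<bar>z\<bar> < int n"
  shows "(\<Sum>i=1..n. sin (2 * pi * of_int z * real i / real n)) = 0"
proof -
  define a where "a = 2 * pi * of_int z / real n"
  define f where "f i = - cos ((real i - 1 / 2) * a)" for i :: nat
  have n0: "real n > 0" using z by simp
  have s: "sin (a / 2) \<noteq> 0" using sin_half_nz[OF z] by (simp add: a_def)
  have t: "2 * sin (a / 2) * sin (2 * pi * of_int z * real i / real n) = f (Suc i) - f i" for i
  proof -
    have "f (Suc i) = - cos (real i * a + a / 2)" by (simp add: f_def algebra_simps)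
    moreover have "f i = - cos (real i * a - a / 2)" by (simp add: f_def algebra_simps)
    moreover have "2 * pi * of_int z * real i / real n = real i * a" by (simp add: a_def)
    ultimately show ?thesis by (simp add: cos_add cos_diff)
  qed
  have "2 * sin (a / 2) * (\<Sum>i=1..n. sin (2 * pi * of_int z * real i / real n)) = (\<Sum>i=1..n. f (Suc i) - f i)"
    by (simp add: sum_distrib_left t mult.assoc[symmetric])
  also have "\<dots> = f (Suc n) - f 1" using z by (intro sum_Suc_diff) auto
  also have "f (Suc n) = - cos (a / 2 + 2 * pi * of_int z)"
  proof -
    have na: "real n * a = 2 * pi * of_int z" using n0 by (simp add: a_def)
    have "(real (Suc n) - 1 / 2) * a = a / 2 + real n * a" by (simp add: algebra_simps)
    then show ?thesis by (simp add: f_def na)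
  qed
  also have "\<dots> = f 1" by (simp only: cos_2pi_int_add) (simp add: f_def)
  finally show ?thesis using s by simp
qed


lemma gram:
  fixes u :: "nat \<Rightarrow> nat \<Rightarrow> real"
  shows "(\<Sum>i\<in>I. \<Sum>j\<in>I. (\<Sum>l\<in>J. u l i * u l j)\<^sup>2) = (\<Sum>l\<in>J. \<Sum>l'\<in>J. (\<Sum>i\<in>I. u l i * u l' i)\<^sup>2)"
proof -
  define f where "f i j l l' = u l i * u l j * (u l' i * u l' j)" for i j l l'
  have L: "(\<Sum>i\<in>I. \<Sum>j\<in>I. (\<Sum>l\<in>J. u l i * u l j)\<^sup>2) = (\<Sum>i\<in>I. \<Sum>j\<in>I. \<Sum>l\<in>J. \<Sum>l'\<in>J. f i j l l')"
    by (simp add: power2_eq_square sum_product f_def)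
  have R: "(\<Sum>l\<in>J. \<Sum>l'\<in>J. (\<Sum>i\<in>I. u l i * u l' i)\<^sup>2) = (\<Sum>l\<in>J. \<Sum>l'\<in>J. \<Sum>i\<in>I. \<Sum>j\<in>I. f i j l l')"
    by (simp add: power2_eq_square sum_product f_def mult_ac)
  have "(\<Sum>i\<in>I. \<Sum>j\<in>I. \<Sum>l\<in>J. \<Sum>l'\<in>J. f i j l l') = (\<Sum>i\<in>I. \<Sum>l\<in>J. \<Sum>j\<in>I. \<Sum>l'\<in>J. f i j l l')"
    by (rule sum.cong[OF refl]) (rule sum.swap)
  also have "\<dots> = (\<Sum>l\<in>J. \<Sum>i\<in>I. \<Sum>j\<in>I. \<Sum>l'\<in>J. f i j l l')"
    by (rule sum.swap)
  also have "\<dots> = (\<Sum>l\<in>J. \<Sum>i\<in>I. \<Sum>l'\<in>J. \<Sum>j\<in>I. f i j l l')"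
    by (rule sum.cong[OF refl], rule sum.cong[OF refl]) (rule sum.swap)
  also have "\<dots> = (\<Sum>l\<in>J. \<Sum>l'\<in>J. \<Sum>i\<in>I. \<Sum>j\<in>I. f i j l l')"
    by (rule sum.cong[OF refl]) (rule sum.swap)
  finally show ?thesis using L R by simp
qed

definition cS :: "nat \<Rightarrow> int \<Rightarrow> real" where
  "cS n z = (\<Sum>i=1..n. cos (2 * pi * of_int z * (real i / real n)))"
definition sS :: "nat \<Rightarrow> int \<Rightarrow> real" where
  "sS n z = (\<Sum>i=1..n. sin (2 * pi * of_int z * (real i / real n)))"

lemma cS0: "cS n 0 = real n" by (simp add: cS_def)
lemma sS0: "sS n 0 = 0" by (simp add: sS_def)
lemma cSz: "0 < \<bar>z\<bar> \<Longrightarrow> \<bar>z\<bar> < int n \<Longrightarrow> cS n z = 0"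
  using cos_sum_zero[of z n] by (simp add: cS_def)
lemma sSz: "0 < \<bar>z\<bar> \<Longrightarrow> \<bar>z\<bar> < int n \<Longrightarrow> sS n z = 0"
  using sin_sum_zero[of z n] by (simp add: sS_def)

lemma trig_orth:
  assumes l: "2 \<le> l" and l': "2 \<le> l'" and lt: "l div 2 + l' div 2 < n"
  shows "(\<Sum>i=1..n. trig_phi l (real i / real n) * trig_phi l' (real i / real n)) = (if l = l' then real n else 0)"
proof -
  define p where "p = l div 2"
  define q where "q = l' div 2"
  have p1: "p \<ge> 1" and q1: "q \<ge> 1" using l l' by (auto simp: p_def q_def)
  have pq: "int p + int q < int n" using lt by (simp add: p_def q_def)
  have zp: "0 < \<bar>int p + int q\<bar>" "\<bar>int p + int q\<bar> < int n" using p1 pq by auto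
  have zm: "\<bar>int p - int q\<bar> < int n" using pq by auto
  have ln: "l \<noteq> 1" "l' \<noteq> 1" using l l' by auto
  define x where "x i = real i / real n" for i :: nat
  have s2: "sqrt 2 * sqrt 2 = (2::real)" by simp
  have cc: "trig_phi (2 * p) (x i) * trig_phi (2 * q) (x i)
      = cos (2 * pi * of_int (int p - int q) * x i) + cos (2 * pi * of_int (int p + int q) * x i)" if "p \<ge> 1" "q \<ge> 1" for i p q
  proof -
    have "cos (2 * pi * of_int (int p - int q) * x i) + cos (2 * pi * of_int (int p + int q) * x i)
        = cos (2 * pi * real p * x i - 2 * pi * real q * x i) + cos (2 * pi * real p * x i + 2 * pi * real q * x i)"
      by (simp add: algebra_simps)
    also have "\<dots> = 2 * cos (2 * pi * real p * x i) * cos (2 * pi * real q * x i)"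
      by (simp add: cos_add cos_diff)
    finally show ?thesis using that s2 by (simp add: trig_phi_def mult_ac)
  qed
  have ss: "trig_phi (2 * p + 1) (x i) * trig_phi (2 * q + 1) (x i)
      = cos (2 * pi * of_int (int p - int q) * x i) - cos (2 * pi * of_int (int p + int q) * x i)" if "p \<ge> 1" "q \<ge> 1" for i p q
  proof -
    have "cos (2 * pi * of_int (int p - int q) * x i) - cos (2 * pi * of_int (int p + int q) * x i)
        = cos (2 * pi * real p * x i - 2 * pi * real q * x i) - cos (2 * pi * real p * x i + 2 * pi * real q * x i)"
      by (simp add: algebra_simps)
    also have "\<dots> = 2 * sin (2 * pi * real p * x i) * sin (2 * pi * real q * x i)"
      by (simp add: cos_add cos_diff)
    finally show ?thesis using that s2 by (simp add: trig_phi_def mult_ac)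
  qed
  have sc: "trig_phi (2 * p + 1) (x i) * trig_phi (2 * q) (x i)
      = sin (2 * pi * of_int (int p + int q) * x i) + sin (2 * pi * of_int (int p - int q) * x i)" if "p \<ge> 1" "q \<ge> 1" for i p q
  proof -
    have "sin (2 * pi * of_int (int p + int q) * x i) + sin (2 * pi * of_int (int p - int q) * x i)
        = sin (2 * pi * real p * x i + 2 * pi * real q * x i) + sin (2 * pi * real p * x i - 2 * pi * real q * x i)"
      by (simp add: algebra_simps)
    also have "\<dots> = 2 * sin (2 * pi * real p * x i) * cos (2 * pi * real q * x i)"
      by (simp add: sin_add sin_diff)
    finally show ?thesis using that s2 by (simp add: trig_phi_def mult_ac)
  qed
  have cs: "trig_phi (2 * p) (x i) * trig_phi (2 * q + 1) (x i)
      = sin (2 * pi * of_int (int p + int q) * x i) - sin (2 * pi * of_int (int p - int q) * x i)" if "p \<ge> 1" "q \<ge> 1" for i p q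
  proof -
    have "sin (2 * pi * of_int (int p + int q) * x i) - sin (2 * pi * of_int (int p - int q) * x i)
        = sin (2 * pi * real p * x i + 2 * pi * real q * x i) - sin (2 * pi * real p * x i - 2 * pi * real q * x i)"
      by (simp add: algebra_simps)
    also have "\<dots> = 2 * cos (2 * pi * real p * x i) * sin (2 * pi * real q * x i)"
      by (simp add: sin_add sin_diff)
    finally show ?thesis using that s2 by (simp add: trig_phi_def mult_ac)
  qed
  have lrep: "l = 2 * p + l mod 2" "l' = 2 * q + l' mod 2" by (simp_all add: p_def q_def)
  have sumx: "(\<Sum>i=1..n. trig_phi l (real i / real n) * trig_phi l' (real i / real n)) = (\<Sum>i=1..n. trig_phi l (x i) * trig_phi l' (x i))"
    by (simp add: x_def)
  show ?thesis
  proof (cases "even l")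
    case el: True
    then have l2: "l = 2 * p" using lrep by simp
    show ?thesis
    proof (cases "even l'")
      case el': True
      then have l2': "l' = 2 * q" using lrep by simp
      have "(\<Sum>i=1..n. trig_phi l (x i) * trig_phi l' (x i)) = cS n (int p - int q) + cS n (int p + int q)"
        unfolding l2 l2' using cc[OF p1 q1] by (simp add: sum.distrib cS_def x_def)
      then show ?thesis using sumx cSz[OF zp] cSz[OF _ zm] cS0 l2 l2' by (cases "p = q") auto
    next
      case ol': False
      then have l2': "l' = 2 * q + 1" using lrep by (simp add: odd_iff_mod_2_eq_one)
      have "(\<Sum>i=1..n. trig_phi l (x i) * trig_phi l' (x i)) = sS n (int p + int q) - sS n (int p - int q)"
        unfolding l2 l2' using cs[OF p1 q1] by (simp add: sum_subtractf sS_def x_def)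
      then show ?thesis using sumx sSz[OF zp] sSz[OF _ zm] sS0 l2 l2' by (cases "p = q") auto
    qed
  next
    case ol: False
    then have l2: "l = 2 * p + 1" using lrep by (simp add: odd_iff_mod_2_eq_one)
    show ?thesis
    proof (cases "even l'")
      case el': True
      then have l2': "l' = 2 * q" using lrep by simp
      have "(\<Sum>i=1..n. trig_phi l (x i) * trig_phi l' (x i)) = sS n (int p + int q) + sS n (int p - int q)"
        unfolding l2 l2' using sc[OF p1 q1] by (simp add: sum.distrib sS_def x_def)
      then show ?thesis using sumx sSz[OF zp] sSz[OF _ zm] sS0 l2 l2' by (cases "p = q") auto
    next
      case ol': False
      then have l2': "l' = 2 * q + 1" using lrep by (simp add: odd_iff_mod_2_eq_one)
      have "(\<Sum>i=1..n. trig_phi l (x i) * trig_phi l' (x i)) = cS n (int p - int q) - cS n (int p + int q)"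
        unfolding l2 l2' using ss[OF p1 q1] by (simp add: sum_subtractf cS_def x_def)
      then show ?thesis using sumx cSz[OF zp] cSz[OF _ zm] cS0 l2 l2' by (cases "p = q") auto
    qed
  qed
qed

lemma coef_a_eq:
  "coef_a n N i j = (\<Sum>l\<in>{N+1..2*N}. trig_phi l (real i / real n) * trig_phi l (real j / real n))"
proof -
  have "{1..2*N} = {1..N} \<union> {N+1..2*N}" by auto
  moreover have "{1..N} \<inter> {N+1..2*N} = {}" by auto
  ultimately have "(\<Sum>l\<in>{1..2*N}. trig_phi l (real i / real n) * trig_phi l (real j / real n))
      = (\<Sum>l\<in>{1..N}. trig_phi l (real i / real n) * trig_phi l (real j / real n))
        + (\<Sum>l\<in>{N+1..2*N}. trig_phi l (real i / real n) * trig_phi l (real j / real n))"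
    by (simp add: sum.union_disjoint)
  then show ?thesis by (simp add: coef_a_def dirichlet_kernel_def)
qed

lemma coef_a_sym: "coef_a n N i j = coef_a n N j i"
  by (simp add: coef_a_eq mult_ac)

lemma FF_bound:
  assumes N1: "1 \<le> N" and Nn: "N \<le> n div 3"
  shows "(\<Sum>i\<in>{1..n}. \<Sum>j\<in>{1..n}. (coef_a n N i j)\<^sup>2) = real N * (real n)\<^sup>2"
proof -
  define u where "u l i = trig_phi l (real i / real n)" for l i
  have "(\<Sum>i\<in>{1..n}. \<Sum>j\<in>{1..n}. (coef_a n N i j)\<^sup>2)
      = (\<Sum>i\<in>{1..n}. \<Sum>j\<in>{1..n}. (\<Sum>l\<in>{N+1..2*N}. u l i * u l j)\<^sup>2)"
    by (simp add: coef_a_eq u_def)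
  also have "\<dots> = (\<Sum>l\<in>{N+1..2*N}. \<Sum>l'\<in>{N+1..2*N}. (\<Sum>i\<in>{1..n}. u l i * u l' i)\<^sup>2)"
    by (rule gram)
  also have "\<dots> = (\<Sum>l\<in>{N+1..2*N}. \<Sum>l'\<in>{N+1..2*N}. (if l = l' then (real n)\<^sup>2 else 0))"
  proof (intro sum.cong refl)
    fix l l' assume l: "l \<in> {N+1..2*N}" and l': "l' \<in> {N+1..2*N}"
    have "l div 2 + l' div 2 \<le> 2 * N" using l l' by auto
    also have "\<dots> < n" using Nn N1 by linarith
    finally have lt: "l div 2 + l' div 2 < n" .
    have "(\<Sum>i\<in>{1..n}. u l i * u l' i) = (if l = l' then real n else 0)"
      unfolding u_def by (rule trig_orth) (use l l' N1 lt in auto)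
    then show "(\<Sum>i\<in>{1..n}. u l i * u l' i)\<^sup>2 = (if l = l' then (real n)\<^sup>2 else 0)" by simp
  qed
  also have "\<dots> = (\<Sum>l\<in>{N+1..2*N}. (real n)\<^sup>2)" by simp
  also have "\<dots> = real N * (real n)\<^sup>2" by simp
  finally show ?thesis .
qed


theorem lemma4:
  "\<exists>C::real. \<forall>(M::'a measure) (\<xi>::nat \<Rightarrow> 'a \<Rightarrow> real) (k::nat) (n::nat) (N::nat).
     prob_space M \<longrightarrow>
     (\<forall>i. \<xi> i \<in> borel_measurable M) \<longrightarrow>
     prob_space.indep_vars M (\<lambda>_. borel) \<xi> UNIV \<longrightarrow>
     (\<forall>i. distr M borel (\<xi> i) = distr M borel (\<xi> 1)) \<longrightarrow>
     integrable M (\<xi> 1) \<longrightarrow>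
     (\<integral>\<omega>. \<xi> 1 \<omega> \<partial>M) = 0 \<longrightarrow>
     2 \<le> k \<longrightarrow>
     integrable M (\<lambda>\<omega>. \<xi> 1 \<omega> ^ (2 * k)) \<longrightarrow>
     1 \<le> N \<longrightarrow> N \<le> n div 3 \<longrightarrow>
     Lnorm M k (Psi2 M \<xi> n N)
       \<le> C * real k * (\<integral>\<omega>. \<xi> 1 \<omega> ^ (2 * k) \<partial>M) powr (1 / real k) * sqrt (real N) / real n"
proof (intro exI[of _ 17] allI impI)
  fix M :: "'a measure" and \<xi> :: "nat \<Rightarrow> 'a \<Rightarrow> real" and k n N :: nat
  assume ps: "prob_space M" and meas: "\<forall>i. \<xi> i \<in> borel_measurable M"
    and ind: "prob_space.indep_vars M (\<lambda>_. borel) \<xi> UNIV"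
    and idd: "\<forall>i. distr M borel (\<xi> i) = distr M borel (\<xi> 1)"
    and i1: "integrable M (\<xi> 1)" and c0: "(\<integral>\<omega>. \<xi> 1 \<omega> \<partial>M) = 0"
    and k2: "2 \<le> k" and i2k: "integrable M (\<lambda>\<omega>. \<xi> 1 \<omega> ^ (2 * k))"
    and N1: "1 \<le> N" and Nn: "N \<le> n div 3"
  have qs: "qsetting M \<xi> k"
  proof (rule qsetting.intro[OF ps], rule qsetting_axioms.intro)
    show "\<And>i. \<xi> i \<in> borel_measurable M" using meas by blast
    show "prob_space.indep_vars M (\<lambda>_. borel) \<xi> UNIV" by (rule ind)
    show "\<And>i. distr M borel (\<xi> i) = distr M borel (\<xi> 1)" using idd by blast
    show "(\<integral>\<omega>. \<xi> 1 \<omega> \<partial>M) = 0" by (rule c0)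
    show "2 \<le> k" by (rule k2)
    show "integrable M (\<lambda>\<omega>. \<xi> 1 \<omega> ^ (2 * k))" by (rule i2k)
  qed
  interpret qsetting M \<xi> k by (rule qs)
  have n0: "real n > 0" using N1 Nn by simp
  have k0: "k > 0" using k2 by simp
  define a where "a = coef_a n N"
  have asym: "\<And>i j. a i j = a j i" unfolding a_def by (rule coef_a_sym)
  define Q where "Q \<omega> = (\<Sum>i\<in>{1..n}. Dq a i \<omega>)" for \<omega>
  have Psi: "Psi2 M \<xi> n N = (\<lambda>\<omega>. (1 / (real n)\<^sup>2) * Q \<omega>)"
  proof
    fix \<omega>
    have "(\<Sum>i\<in>{1..n}. \<Sum>j\<in>{1..n}. a i j * (\<xi> i \<omega> * \<xi> j \<omega> - (\<integral>\<omega>'. \<xi> i \<omega>' * \<xi> j \<omega>' \<partial>M))) = Q \<omega>"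
      using fun_cong[OF quad_id[where a=a and n=n, OF asym], of \<omega>] by (simp add: Q_def)
    then show "Psi2 M \<xi> n N \<omega> = (1 / (real n)\<^sup>2) * Q \<omega>" by (simp add: Psi2_def a_def)
  qed
  define X where "X = (real k)\<^sup>2 * mm\<^sup>2 * (real N * (real n)\<^sup>2)"
  have X0: "X \<ge> 0" by (simp add: X_def)
  have b1: "(Lnorm M k Q)\<^sup>2 \<le> 288 * X"
    using quad_bound[where n=n and a=a] FF_bound[OF N1 Nn] by (simp add: Q_def[abs_def] a_def X_def mult.assoc)
  have e: "(17 * real k * mm * sqrt (real N) * real n)\<^sup>2 = 289 * X"
    by (simp add: power_mult_distrib X_def)
  have b2: "(Lnorm M k Q)\<^sup>2 \<le> (17 * real k * mm * sqrt (real N) * real n)\<^sup>2"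
    unfolding e using b1 X0 by linarith
  have nn: "0 \<le> 17 * real k * mm * sqrt (real N) * real n"
    by (intro mult_nonneg_nonneg) (auto simp: mm_nonneg)
  have b3: "Lnorm M k Q \<le> 17 * real k * mm * sqrt (real N) * real n"
    by (rule power2_le_imp_le[OF b2 nn])
  have "Lnorm M k (Psi2 M \<xi> n N) = (1 / (real n)\<^sup>2) * Lnorm M k Q"
    unfolding Psi using Lnorm_scale[OF k0, of M "1 / (real n)\<^sup>2" Q] by simp
  also have "\<dots> \<le> (1 / (real n)\<^sup>2) * (17 * real k * mm * sqrt (real N) * real n)"
    using b3 by (intro mult_left_mono) auto
  also have "\<dots> = 17 * real k * mm * sqrt (real N) / real n"
    using n0 by (simp add: power2_eq_square field_simps)
  finally show "Lnorm M k (Psi2 M \<xi> n N)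
       \<le> 17 * real k * (\<integral>\<omega>. \<xi> 1 \<omega> ^ (2 * k) \<partial>M) powr (1 / real k) * sqrt (real N) / real n"
    by (simp add: mm_def)
qed


end
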